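(* Under the assumptions of Lemma 3.14 (i.e. $r,s\ge0$, $\Delta=(v_1,\dots,v_n)$ vectors in $\mathbb{Z}^2\setminus\{0\}$, $F\subset\{1,\dots,n\}$ with $r+2s+|F|=|\Delta|-1$, and $\mathcal{P}$ a collection of conditions in general position for $\mathrm{ev}_F$), the unoriented and oriented refined broccoli invariants agree: $$N^{urB}_{(r,s)}(y,\Delta,F,\mathcal{P})=N^{rB}_{(r,s)}(y,\Delta,F,\mathcal{P}).$$
   Context: Curves. An $(r,s)$-marked curve of degree $\Delta$ is $C=(\Gamma,h,x_1,\dots,x_{r+s})$ with $\Gamma$ a metric graph whose components are trees, $h:\Gamma\to\mathbb{R}^2$ continuous, affine with integral direction vectors on edges, balanced at vertices; $x_1,\dots,x_r$ (real) and $x_{r+1},\dots,x_{r+s}$ (complex) are contracted unbounded edges (markings), the other unbounded edges $y_1,\dots,y_n$ (labeled ends) have outward direction vectors $\Delta=(v(y_1),\dots,v(y_n))$. Weight $w(e)$ = gcd of coordinates of direction vector. Mikhalkin multiplicity of a vertex with exactly three non-contracted edges of direction vectors $u,v,w$: $a=|\det(u,v)|$. $\mathcal{M}_{(r,s)}(\Delta)$ is the polyhedral complex of connected such curves. An oriented curve carries orientations of non-contracted edges; $F=\{i: y_i\text{ inward}\}$ (fixed ends); $\mathcal{M}^{or}_{(r,s)}(\Delta,F)$ the connected oriented curves with fixed ends $F$. $\mathrm{ev}_F(C)=(h(x_1),\dots,h(x_{r+s}),(h(y_i))_{i\in F})$; general position means avoiding images of cells whose image has dimension $<2(r+s)+|F|$.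 $G(\Delta,F)$: permutations of $\{1,\dots,n\}$ fixing $F$ pointwise and preserving $v(y_i)$. Oriented refined broccoli curve: vertices of types (I) real marking, two outgoing non-contracted edges, $m_V(y)=1$; (II) unmarked 3-valent, two in one out, $m_V(y)=\frac{y^{a/2}-y^{-a/2}}{y^{1/2}-y^{-1/2}}$; (III) complex marking, three outgoing non-contracted edges, $m_V(y)=\frac{y^{a/2}+y^{-a/2}}{y^{1/2}+y^{-1/2}}$. Unoriented refined broccoli curve: vertices of types (I') 3-valent with real marking, $m_V(y)=1$; (II') 3-valent unmarked, $m_V(y)=\frac{y^{a/2}-y^{-a/2}}{y^{1/2}-y^{-1/2}}$; (III') 4-valent with complex marking, $m_V(y)=\frac{y^{a/2}+y^{-a/2}}{y^{1/2}+y^{-1/2}}$. End factors (relative to $F$): $m_{y_i}(y)=\frac{y^{w(y_i)/2}+(-1)^{w(y_i)}y^{-w(y_i)/2}}{y^{1/2}+(-1)^{w(y_i)}y^{-1/2}}$ for $i\in F$ and $m_{y_i}(y)=\frac{y^{w(y_i)/2}-(-1)^{w(y_i)}y^{-w(y_i)/2}}{w(y_i)(y^{1/2}-(-1)^{w(y_i)}y^{-1/2})}$ for $i\notin F$. The multiplicity of a (oriented or unoriented) refined broccoli curve is $m_C(y)=\prod_i m_{y_i}(y)\prod_V m_V(y)$. $N^{rB}_{(r,s)}(y,\Delta,F,\mathcal P)=\frac{1}{|G(\Delta,F)|}\sum m_C(y)$ over oriented refined broccoli curves in $\mathcal{M}^{or}_{(r,s)}(\Delta,F)$ with $\mathrm{ev}_F(C)=\mathcal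 P$; $N^{urB}_{(r,s)}(y,\Delta,F,\mathcal P)=\frac{1}{|G(\Delta,F)|}\sum m_C(y)$ over unoriented refined broccoli curves in $\mathcal{M}_{(r,s)}(\Delta)$ with $\mathrm{ev}_F(C)=\mathcal P$. *)

theory Defs
  imports "HOL-Analysis.Analysis" "HOL-Combinatorics.Permutations"
begin

section \<open>Parametrized (r,s)-marked plane tropical curves (combinatorial encoding)\<close>

text \<open>Conventions: ends y_0,...,y_{n-1} (n = length Delta), markings x_0,...,x_{r+s-1};
  x_j is real for j < r and complex for r <= j < r+s.  Vertices of the tree Gamma are
  0,...,nV-1.  bE is the (symmetric) set of bounded edges, bdir C u w the direction vector
  of the bounded edge from u to w (so that h(w) - h(u) = length * bdir C u w),
  vpos C v = h(v), endv C i the vertex where the end y_i is attached,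
  markv C j the vertex where the contracted marking x_j is attached.\<close>

record pcurve =
  nV    :: nat
  bE    :: "(nat \<times> nat) set"
  bdir  :: "nat \<Rightarrow> nat \<Rightarrow> int \<times> int"
  vpos  :: "nat \<Rightarrow> real \<times> real"
  endv  :: "nat \<Rightarrow> nat"
  markv :: "nat \<Rightarrow> nat"

definition det2 :: "int \<times> int \<Rightarrow> int \<times> int \<Rightarrow> int" where
  "det2 u v = fst u * snd v - snd u * fst v"

definition wt :: "int \<times> int \<Rightarrow> nat" where
  "wt v = nat (gcd (fst v) (snd v))"

text \<open>flags at a vertex: the non-contracted edges adjacent to v (bounded edges and ends)\<close>
definition flags :: "(int \<times> int) list \<Rightarrow> pcurve \<Rightarrow> nat \<Rightarrow> (nat + nat) set" where
  "flags \<Delta> C v = Inl ` {w. (v, w) \<in> bE C} \<union> Inr ` {i. i < length \<Delta> \<and> endv C i = v}"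

definition odir :: "(int \<times> int) list \<Rightarrow> pcurve \<Rightarrow> nat \<Rightarrow> nat + nat \<Rightarrow> int \<times> int" where
  "odir \<Delta> C v f = (case f of Inl w \<Rightarrow> bdir C v w | Inr i \<Rightarrow> \<Delta> ! i)"

definition marks :: "nat \<Rightarrow> nat \<Rightarrow> pcurve \<Rightarrow> nat \<Rightarrow> nat set" where
  "marks r s C v = {j. j < r + s \<and> markv C j = v}"

text \<open>C is an element of M_(r,s)(Delta): connected (tree), balanced, integral directions,
  positive edge lengths, abstract tropical curve (all vertices at least 3-valent).\<close>
definition is_curve :: "nat \<Rightarrow> nat \<Rightarrow> (int \<times> int) list \<Rightarrow> pcurve \<Rightarrow> bool" where
  "is_curve r s \<Delta> C \<longleftrightarrow>
     0 < nV C \<and>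
     bE C \<subseteq> {..<nV C} \<times> {..<nV C} \<and> sym (bE C) \<and> (\<forall>u. (u, u) \<notin> bE C) \<and>
     (\<forall>u w. (u, w) \<in> bE C \<longrightarrow>
        bdir C u w \<noteq> (0, 0) \<and>
        bdir C w u = (- fst (bdir C u w), - snd (bdir C u w)) \<and>
        (\<exists>l::real. l > 0 \<and>
           fst (vpos C w) - fst (vpos C u) = l * of_int (fst (bdir C u w)) \<and>
           snd (vpos C w) - snd (vpos C u) = l * of_int (snd (bdir C u w)))) \<and>
     (\<forall>u < nV C. \<forall>w < nV C. (u, w) \<in> (bE C)\<^sup>*) \<and>
     card (bE C) = 2 * (nV C - 1) \<and>
     (\<forall>i < length \<Delta>. endv C i < nV C) \<and>
     (\<forall>j < r + s. markv C j < nV C) \<and>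
     (\<forall>v < nV C. (\<Sum>f\<in>flags \<Delta> C v. fst (odir \<Delta> C v f)) = 0 \<and>
                 (\<Sum>f\<in>flags \<Delta> C v. snd (odir \<Delta> C v f)) = 0) \<and>
     (\<forall>v < nV C. card (flags \<Delta> C v) + card (marks r s C v) \<ge> 3)"

text \<open>Mikhalkin multiplicity |det(u,v)| of two of the (three) non-contracted edges at v\<close>
definition mikh :: "(int \<times> int) list \<Rightarrow> pcurve \<Rightarrow> nat \<Rightarrow> nat" where
  "mikh \<Delta> C v = Max {nat \<bar>det2 (odir \<Delta> C v f) (odir \<Delta> C v g)\<bar> | f g.
                        f \<in> flags \<Delta> C v \<and> g \<in> flags \<Delta> C v \<and> f \<noteq> g}"

section \<open>Evaluation map and general position\<close>

text \<open>A collection of conditions P: points (fst P j) for the markings x_j, j < r+s, and, for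
  i in F, the value of the image of y_i in R^2/<v_i>, identified with R via p |-> det(v_i,p).\<close>
type_synonym conds = "(nat \<Rightarrow> real \<times> real) \<times> (nat \<Rightarrow> real)"

definition lineval :: "int \<times> int \<Rightarrow> real \<times> real \<Rightarrow> real" where
  "lineval v p = of_int (fst v) * snd p - of_int (snd v) * fst p"

definition ev_eq :: "nat \<Rightarrow> nat \<Rightarrow> (int \<times> int) list \<Rightarrow> nat set \<Rightarrow> pcurve \<Rightarrow> conds \<Rightarrow> bool" where
  "ev_eq r s \<Delta> F C P \<longleftrightarrow>
     (\<forall>j < r + s. vpos C (markv C j) = fst P j) \<and>
     (\<forall>i \<in> F. lineval (\<Delta> ! i) (vpos C (endv C i)) = snd P i)"

text \<open>ev_F(C) as a coordinate vector in R^(2(r+s)+|F|) (padded with zeros)\<close>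
definition evvec :: "nat \<Rightarrow> nat \<Rightarrow> (int \<times> int) list \<Rightarrow> nat set \<Rightarrow> pcurve \<Rightarrow> nat \<Rightarrow> real" where
  "evvec r s \<Delta> F C t =
     (if t < 2 * (r + s) then
        (if even t then fst (vpos C (markv C (t div 2))) else snd (vpos C (markv C (t div 2))))
      else if t - 2 * (r + s) \<in> F then
        lineval (\<Delta> ! (t - 2 * (r + s))) (vpos C (endv C (t - 2 * (r + s))))
      else 0)"

text \<open>the cell of M_(r,s)(Delta) containing C: all curves of the same combinatorial type\<close>
definition cell :: "nat \<Rightarrow> nat \<Rightarrow> (int \<times> int) list \<Rightarrow> pcurve \<Rightarrow> pcurve set" where
  "cell r s \<Delta> C = {C'. is_curve r s \<Delta> C' \<and> nV C' = nV C \<and> bE C' = bE C \<and>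
      (\<forall>(u, w) \<in> bE C. bdir C' u w = bdir C u w) \<and>
      (\<forall>i < length \<Delta>. endv C' i = endv C i) \<and> (\<forall>j < r + s. markv C' j = markv C j)}"

text \<open>a set S of real vectors has affine dimension at least d\<close>
definition dim_ge :: "nat \<Rightarrow> (nat \<Rightarrow> real) set \<Rightarrow> bool" where
  "dim_ge d S \<longleftrightarrow> (\<exists>p. (\<forall>i \<le> d. p i \<in> S) \<and>
      (\<forall>c::nat \<Rightarrow> real. (\<forall>t. (\<Sum>i\<in>{1..d}. c i * (p i t - p 0 t)) = 0) \<longrightarrow>
                       (\<forall>i \<in> {1..d}. c i = 0)))"

text \<open>P is in general position for ev_F: P avoids ev_F(cell) for every cell whose image has
  dimension < 2(r+s)+|F|.\<close>
definition gen_pos :: "nat \<Rightarrow> nat \<Rightarrow> (int \<times> int) list \<Rightarrow> nat set \<Rightarrow> conds \<Rightarrow> bool" where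
  "gen_pos r s \<Delta> F P \<longleftrightarrow>
     (\<forall>C. is_curve r s \<Delta> C \<and> ev_eq r s \<Delta> F C P \<longrightarrow>
          dim_ge (2 * (r + s) + card F) (evvec r s \<Delta> F ` cell r s \<Delta> C))"

section \<open>Multiplicities\<close>

definition qminus :: "nat \<Rightarrow> real \<Rightarrow> real" where
  "qminus a y = (y powr (real a / 2) - y powr (- (real a / 2))) / (y powr (1/2) - y powr (- (1/2)))"

definition qplus :: "nat \<Rightarrow> real \<Rightarrow> real" where
  "qplus a y = (y powr (real a / 2) + y powr (- (real a / 2))) / (y powr (1/2) + y powr (- (1/2)))"

definition endfac :: "(int \<times> int) list \<Rightarrow> nat set \<Rightarrow> nat \<Rightarrow> real \<Rightarrow> real" where
  "endfac \<Delta> F i y = (let w = wt (\<Delta> ! i) in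
     if i \<in> F then
       (y powr (real w / 2) + (-1) ^ w * y powr (- (real w / 2))) /
       (y powr (1/2) + (-1) ^ w * y powr (- (1/2)))
     else
       (y powr (real w / 2) - (-1) ^ w * y powr (- (real w / 2))) /
       (real w * (y powr (1/2) - (-1) ^ w * y powr (- (1/2)))))"

definition typeI' :: "nat \<Rightarrow> nat \<Rightarrow> (int \<times> int) list \<Rightarrow> pcurve \<Rightarrow> nat \<Rightarrow> bool" where
  "typeI' r s \<Delta> C v \<longleftrightarrow> card (flags \<Delta> C v) = 2 \<and> (\<exists>j < r. marks r s C v = {j})"

definition typeII' :: "nat \<Rightarrow> nat \<Rightarrow> (int \<times> int) list \<Rightarrow> pcurve \<Rightarrow> nat \<Rightarrow> bool" where
  "typeII' r s \<Delta> C v \<longleftrightarrow> card (flags \<Delta> C v) = 3 \<and> marks r s C v = {}"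

definition typeIII' :: "nat \<Rightarrow> nat \<Rightarrow> (int \<times> int) list \<Rightarrow> pcurve \<Rightarrow> nat \<Rightarrow> bool" where
  "typeIII' r s \<Delta> C v \<longleftrightarrow> card (flags \<Delta> C v) = 3 \<and>
     (\<exists>j. r \<le> j \<and> j < r + s \<and> marks r s C v = {j})"

definition unor_broccoli :: "nat \<Rightarrow> nat \<Rightarrow> (int \<times> int) list \<Rightarrow> pcurve \<Rightarrow> bool" where
  "unor_broccoli r s \<Delta> C \<longleftrightarrow> is_curve r s \<Delta> C \<and>
     (\<forall>v < nV C. typeI' r s \<Delta> C v \<or> typeII' r s \<Delta> C v \<or> typeIII' r s \<Delta> C v)"

definition mV_un :: "nat \<Rightarrow> nat \<Rightarrow> (int \<times> int) list \<Rightarrow> pcurve \<Rightarrow> real \<Rightarrow> nat \<Rightarrow> real" where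
  "mV_un r s \<Delta> C y v =
     (if typeI' r s \<Delta> C v then 1
      else if typeII' r s \<Delta> C v then qminus (mikh \<Delta> C v) y
      else qplus (mikh \<Delta> C v) y)"

definition mult_un :: "nat \<Rightarrow> nat \<Rightarrow> (int \<times> int) list \<Rightarrow> nat set \<Rightarrow> real \<Rightarrow> pcurve \<Rightarrow> real" where
  "mult_un r s \<Delta> F y C =
     (\<Prod>i < length \<Delta>. endfac \<Delta> F i y) * (\<Prod>v < nV C. mV_un r s \<Delta> C y v)"

text \<open>An orientation of the bounded edges: ori u w means the edge {u,w} is oriented from u to w.
  Ends y_i are oriented inward iff i \<in> F.\<close>
definition valid_ori :: "pcurve \<Rightarrow> (nat \<Rightarrow> nat \<Rightarrow> bool) \<Rightarrow> bool" where
  "valid_ori C ori \<longleftrightarrow> (\<forall>u w. ori u w \<longrightarrow> (u, w) \<in> bE C) \<and>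
     (\<forall>u w. (u, w) \<in> bE C \<longrightarrow> (ori u w \<longleftrightarrow> \<not> ori w u))"

definition outgoing :: "nat set \<Rightarrow> (nat \<Rightarrow> nat \<Rightarrow> bool) \<Rightarrow> nat \<Rightarrow> nat + nat \<Rightarrow> bool" where
  "outgoing F ori v f = (case f of Inl w \<Rightarrow> ori v w | Inr i \<Rightarrow> i \<notin> F)"

definition ins :: "(int \<times> int) list \<Rightarrow> nat set \<Rightarrow> pcurve \<Rightarrow> (nat \<Rightarrow> nat \<Rightarrow> bool) \<Rightarrow> nat \<Rightarrow> (nat + nat) set" where
  "ins \<Delta> F C ori v = {f \<in> flags \<Delta> C v. \<not> outgoing F ori v f}"

definition typeI :: "nat \<Rightarrow> nat \<Rightarrow> (int \<times> int) list \<Rightarrow> nat set \<Rightarrow> pcurve \<Rightarrow> (nat \<Rightarrow> nat \<Rightarrow> bool) \<Rightarrow> nat \<Rightarrow> bool" where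
  "typeI r s \<Delta> F C ori v \<longleftrightarrow> card (flags \<Delta> C v) = 2 \<and> ins \<Delta> F C ori v = {} \<and>
     (\<exists>j < r. marks r s C v = {j})"

definition typeII :: "nat \<Rightarrow> nat \<Rightarrow> (int \<times> int) list \<Rightarrow> nat set \<Rightarrow> pcurve \<Rightarrow> (nat \<Rightarrow> nat \<Rightarrow> bool) \<Rightarrow> nat \<Rightarrow> bool" where
  "typeII r s \<Delta> F C ori v \<longleftrightarrow> card (flags \<Delta> C v) = 3 \<and> card (ins \<Delta> F C ori v) = 2 \<and>
     marks r s C v = {}"

definition typeIII :: "nat \<Rightarrow> nat \<Rightarrow> (int \<times> int) list \<Rightarrow> nat set \<Rightarrow> pcurve \<Rightarrow> (nat \<Rightarrow> nat \<Rightarrow> bool) \<Rightarrow> nat \<Rightarrow> bool" where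
  "typeIII r s \<Delta> F C ori v \<longleftrightarrow> card (flags \<Delta> C v) = 3 \<and> ins \<Delta> F C ori v = {} \<and>
     (\<exists>j. r \<le> j \<and> j < r + s \<and> marks r s C v = {j})"

definition or_broccoli :: "nat \<Rightarrow> nat \<Rightarrow> (int \<times> int) list \<Rightarrow> nat set \<Rightarrow> pcurve \<times> (nat \<Rightarrow> nat \<Rightarrow> bool) \<Rightarrow> bool" where
  "or_broccoli r s \<Delta> F Co \<longleftrightarrow> (case Co of (C, ori) \<Rightarrow>
     is_curve r s \<Delta> C \<and> valid_ori C ori \<and>
     (\<forall>v < nV C. typeI r s \<Delta> F C ori v \<or> typeII r s \<Delta> F C ori v \<or> typeIII r s \<Delta> F C ori v))"

definition mV_or :: "nat \<Rightarrow> nat \<Rightarrow> (int \<times> int) list \<Rightarrow> nat set \<Rightarrow> pcurve \<Rightarrow> (nat \<Rightarrow> nat \<Rightarrow> bool) \<Rightarrow> real \<Rightarrow> nat \<Rightarrow> real" where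
  "mV_or r s \<Delta> F C ori y v =
     (if typeI r s \<Delta> F C ori v then 1
      else if typeII r s \<Delta> F C ori v then qminus (mikh \<Delta> C v) y
      else qplus (mikh \<Delta> C v) y)"

definition mult_or :: "nat \<Rightarrow> nat \<Rightarrow> (int \<times> int) list \<Rightarrow> nat set \<Rightarrow> real \<Rightarrow> pcurve \<times> (nat \<Rightarrow> nat \<Rightarrow> bool) \<Rightarrow> real" where
  "mult_or r s \<Delta> F y Co = (case Co of (C, ori) \<Rightarrow>
     (\<Prod>i < length \<Delta>. endfac \<Delta> F i y) * (\<Prod>v < nV C. mV_or r s \<Delta> F C ori y v))"

section \<open>Isomorphism of (labelled, oriented) curves and the counts\<close>

definition curve_iso :: "nat \<Rightarrow> nat \<Rightarrow> (int \<times> int) list \<Rightarrow> pcurve \<Rightarrow> pcurve \<Rightarrow> (nat \<Rightarrow> nat) \<Rightarrow> bool" where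
  "curve_iso r s \<Delta> C C' \<sigma> \<longleftrightarrow>
     bij_betw \<sigma> {..<nV C} {..<nV C'} \<and>
     bE C' = (\<lambda>(u, w). (\<sigma> u, \<sigma> w)) ` bE C \<and>
     (\<forall>(u, w) \<in> bE C. bdir C' (\<sigma> u) (\<sigma> w) = bdir C u w) \<and>
     (\<forall>v < nV C. vpos C' (\<sigma> v) = vpos C v) \<and>
     (\<forall>i < length \<Delta>. endv C' i = \<sigma> (endv C i)) \<and>
     (\<forall>j < r + s. markv C' j = \<sigma> (markv C j))"

definition iso_un :: "nat \<Rightarrow> nat \<Rightarrow> (int \<times> int) list \<Rightarrow> (pcurve \<times> pcurve) set" where
  "iso_un r s \<Delta> = {(C, C'). \<exists>\<sigma>. curve_iso r s \<Delta> C C' \<sigma>}"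

definition iso_or :: "nat \<Rightarrow> nat \<Rightarrow> (int \<times> int) list \<Rightarrow>
    ((pcurve \<times> (nat \<Rightarrow> nat \<Rightarrow> bool)) \<times> (pcurve \<times> (nat \<Rightarrow> nat \<Rightarrow> bool))) set" where
  "iso_or r s \<Delta> = {((C, ori), (C', ori')). \<exists>\<sigma>. curve_iso r s \<Delta> C C' \<sigma> \<and>
       (\<forall>(u, w) \<in> bE C. ori' (\<sigma> u) (\<sigma> w) = ori u w)}"

definition Gperm :: "(int \<times> int) list \<Rightarrow> nat set \<Rightarrow> (nat \<Rightarrow> nat) set" where
  "Gperm \<Delta> F = {\<sigma>. \<sigma> permutes {..<length \<Delta>} \<and> (\<forall>i \<in> F. \<sigma> i = i) \<and>
                     (\<forall>i < length \<Delta>. \<Delta> ! (\<sigma> i) = \<Delta> ! i)}"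

definition urB_curves :: "nat \<Rightarrow> nat \<Rightarrow> (int \<times> int) list \<Rightarrow> nat set \<Rightarrow> conds \<Rightarrow> pcurve set" where
  "urB_curves r s \<Delta> F P = {C. unor_broccoli r s \<Delta> C \<and> ev_eq r s \<Delta> F C P}"

definition rB_curves :: "nat \<Rightarrow> nat \<Rightarrow> (int \<times> int) list \<Rightarrow> nat set \<Rightarrow> conds \<Rightarrow>
    (pcurve \<times> (nat \<Rightarrow> nat \<Rightarrow> bool)) set" where
  "rB_curves r s \<Delta> F P = {(C, ori). or_broccoli r s \<Delta> F (C, ori) \<and> ev_eq r s \<Delta> F C P}"

definition N_urB :: "nat \<Rightarrow> nat \<Rightarrow> real \<Rightarrow> (int \<times> int) list \<Rightarrow> nat set \<Rightarrow> conds \<Rightarrow> real" where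
  "N_urB r s y \<Delta> F P =
     (let A = urB_curves r s \<Delta> F P in
      (1 / real (card (Gperm \<Delta> F))) *
      (\<Sum>K \<in> A // (iso_un r s \<Delta> \<inter> A \<times> A). mult_un r s \<Delta> F y (SOME C. C \<in> K)))"

definition N_rB :: "nat \<Rightarrow> nat \<Rightarrow> real \<Rightarrow> (int \<times> int) list \<Rightarrow> nat set \<Rightarrow> conds \<Rightarrow> real" where
  "N_rB r s y \<Delta> F P =
     (let A = rB_curves r s \<Delta> F P in
      (1 / real (card (Gperm \<Delta> F))) *
      (\<Sum>K \<in> A // (iso_or r s \<Delta> \<inter> A \<times> A). mult_or r s \<Delta> F y (SOME Co. Co \<in> K)))"

end

theory Submission
  imports Defs "HOL-Library.Function_Algebras"
begin


definition dst :: "('a\<times>'a) set \<Rightarrow> 'a \<Rightarrow> 'a \<Rightarrow> nat" where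
  "dst R u x = (LEAST k. (u,x) \<in> R^^k)"

lemma par_ex:
  assumes "(u,x) \<in> R\<^sup>*" "x \<noteq> u"
  shows "\<exists>y. (u,y) \<in> R\<^sup>* \<and> (y,x) \<in> R \<and> dst R u y < dst R u x"
proof -
  obtain k where k: "(u,x) \<in> R^^k" using assms(1) rtrancl_power by blast
  define m where "m = dst R u x"
  have m: "(u,x) \<in> R^^m" unfolding m_def dst_def by (rule LeastI[of _ k], fact k)
  have "m \<noteq> 0"
  proof
    assume "m = 0" then show False using m assms(2) by simp
  qed
  then obtain m' where mm: "m = Suc m'" by (cases m) auto
  from m mm obtain y where y1: "(u,y) \<in> R^^m'" and y2: "(y,x) \<in> R" by auto
  have "dst R u y \<le> m'" unfolding dst_def by (rule Least_le, fact y1)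
  then show ?thesis using y1 y2 mm m_def relpow_imp_rtrancl by fastforce
qed

lemma card_conn:
  assumes fin: "finite V" and sub: "E \<subseteq> V \<times> V" and sy: "sym E" and u: "u \<in> V"
    and conn: "\<forall>x\<in>V. (u,x) \<in> E\<^sup>*"
  shows "2 * (card V - 1) \<le> card E"
proof -
  define p where "p x = (SOME y. (u,y) \<in> E\<^sup>* \<and> (y,x) \<in> E \<and> dst E u y < dst E u x)" for x
  have pp: "(p x, x) \<in> E \<and> dst E u (p x) < dst E u x" if "x \<in> V - {u}" for x
  proof -
    have "\<exists>y. (u,y) \<in> E\<^sup>* \<and> (y,x) \<in> E \<and> dst E u y < dst E u x"
      using par_ex[of u x E] conn that by auto
    then show ?thesis unfolding p_def by (rule someI2_ex) auto
  qed
  define W where "W = V - {u}"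
  have i1: "inj_on (\<lambda>x. (p x, x)) W" by (auto simp: inj_on_def)
  have i2: "inj_on (\<lambda>x. (x, p x)) W" by (auto simp: inj_on_def)
  have dj: "(\<lambda>x. (p x, x)) ` W \<inter> (\<lambda>x. (x, p x)) ` W = {}"
  proof (rule ccontr)
    assume "\<not> ?thesis"
    then obtain x y where xy: "x \<in> W" "y \<in> W" "(p x, x) = (y, p y)" by blast
    from xy(3) have h12: "p x = y \<and> x = p y" by (rule iffD1[OF prod.inject])
    have h1: "y = p x" using h12 by (rule conjE) (rule sym)
    have h2: "x = p y" using h12 by (rule conjE)
    have a1: "dst E u (p x) < dst E u x" and a2: "dst E u (p y) < dst E u y"
      using pp[of x] pp[of y] xy(1,2) unfolding W_def by auto
    from a1 have "dst E u y < dst E u x" by (simp only: h1)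
    moreover from a2 have "dst E u x < dst E u y" by (simp only: h2[symmetric])
    ultimately show False by simp
  qed
  have ss: "(\<lambda>x. (p x, x)) ` W \<union> (\<lambda>x. (x, p x)) ` W \<subseteq> E"
    using pp sy unfolding W_def by (auto dest: symD)
  have fE: "finite E" using sub fin by (meson finite_SigmaI finite_subset)
  have fW: "finite W" using fin W_def by auto
  have "card ((\<lambda>x. (p x, x)) ` W \<union> (\<lambda>x. (x, p x)) ` W) = 2 * card W"
    using card_Un_disjoint[OF finite_imageI[OF fW] finite_imageI[OF fW] dj]
      card_image[OF i1] card_image[OF i2] by simp
  then have "2 * card W \<le> card E" using card_mono[OF fE ss] by linarith
  moreover have "card W = card V - 1" using u fin W_def by simp
  ultimately show ?thesis by (simp only:)
qed

definition Eoff :: "('a\<times>'a) set \<Rightarrow> 'a \<Rightarrow> 'a \<Rightarrow> ('a\<times>'a) set" where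
  "Eoff E u w = E - {(u,w),(w,u)}"

definition side :: "('a\<times>'a) set \<Rightarrow> 'a \<Rightarrow> 'a \<Rightarrow> 'a set" where
  "side E u w = {x. (u,x) \<in> (Eoff E u w)\<^sup>*}"

lemma Eoff_comm: "Eoff E w u = Eoff E u w" unfolding Eoff_def by auto

lemma sym_Eoff: "sym E \<Longrightarrow> sym (Eoff E u w)"
  unfolding Eoff_def sym_def by auto

lemma side_refl: "u \<in> side E u w" unfolding side_def by auto

lemma side_step: "x \<in> side E u w \<Longrightarrow> (x,y) \<in> Eoff E u w \<Longrightarrow> y \<in> side E u w"
  unfolding side_def by (auto intro: rtrancl_into_rtrancl)

lemma side_step_back: "sym E \<Longrightarrow> x \<in> side E u w \<Longrightarrow> (y,x) \<in> Eoff E u w \<Longrightarrow> y \<in> side E u w"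
  using side_step sym_Eoff by (metis symD)

lemma sym_rtrancl_sw: "sym R \<Longrightarrow> (a,b) \<in> R\<^sup>* \<Longrightarrow> (b,a) \<in> R\<^sup>*"
  by (metis rtrancl_converseI sym_conv_converse_eq)

locale tree =
  fixes V :: "'a set" and E :: "('a\<times>'a) set"
  assumes fin: "finite V" and sub: "E \<subseteq> V \<times> V" and sy: "sym E"
    and irr: "\<And>u. (u,u) \<notin> E"
    and conn: "\<And>u w. u \<in> V \<Longrightarrow> w \<in> V \<Longrightarrow> (u,w) \<in> E\<^sup>*"
    and cardE: "card E = 2 * (card V - 1)"
begin

lemma finE: "finite E" using sub fin by (meson finite_SigmaI finite_subset)

lemma edgeV: "(u,w) \<in> E \<Longrightarrow> u \<in> V \<and> w \<in> V" using sub by auto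

lemma side_sub: "u \<in> V \<Longrightarrow> side E u w \<subseteq> V"
proof
  fix x assume u: "u \<in> V" and "x \<in> side E u w"
  then have "(u,x) \<in> (Eoff E u w)\<^sup>*" unfolding side_def by auto
  then show "x \<in> V" using u by induct (auto simp: Eoff_def dest: edgeV)
qed

lemma A1:
  assumes e: "(u,w) \<in> E" shows "w \<notin> side E u w"
proof
  assume w: "w \<in> side E u w"
  have uV: "u \<in> V" and wV: "w \<in> V" using edgeV e by auto
  have cn: "\<forall>x\<in>V. (u,x) \<in> (Eoff E u w)\<^sup>*"
  proof
    fix x assume "x \<in> V"
    then have "(u,x) \<in> E\<^sup>*" using conn uV by auto
    then show "(u,x) \<in> (Eoff E u w)\<^sup>*"
    proof induct
      case base then show ?case by simp
    next
      case (step y z)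
      show ?case
      proof (cases "(y,z) \<in> Eoff E u w")
        case True then show ?thesis using step by (auto intro: rtrancl_into_rtrancl)
      next
        case False
        then have "(y,z) = (u,w) \<or> (y,z) = (w,u)" using step unfolding Eoff_def by auto
        then show ?thesis using w unfolding side_def by auto
      qed
    qed
  qed
  have ne: "u \<noteq> w" using irr e by auto
  have "2 * (card V - 1) \<le> card (Eoff E u w)"
    by (rule card_conn[OF fin _ sym_Eoff[OF sy] uV cn]) (use sub in \<open>auto simp: Eoff_def\<close>)
  moreover have "card (Eoff E u w) = card E - 2"
  proof -
    have "(w,u) \<in> E" using sy e by (auto dest: symD)
    then have "card (E - {(u,w),(w,u)}) = card E - card {(u,w),(w,u)}"
      using e finE by (intro card_Diff_subset) auto
    then show ?thesis using ne unfolding Eoff_def by simp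
  qed
  moreover have "card V \<ge> 2"
  proof -
    have "{u,w} \<subseteq> V" using uV wV by auto
    then have "card {u,w} \<le> card V" using fin card_mono by blast
    then show ?thesis using ne by simp
  qed
  ultimately obtain k where "card V = Suc (Suc k)" "2 * (card V - 1) \<le> card E - 2"
    by (metis add_2_eq_Suc le_Suc_ex)
  then show False using cardE by simp
qed

lemma side_cover:
  assumes e: "(u,w) \<in> E" and x: "x \<in> V"
  shows "x \<in> side E u w \<or> x \<in> side E w u"
proof -
  have uV: "u \<in> V" using edgeV e by auto
  have ew: "(w,u) \<in> E" using sy e by (auto dest: symD)
  have "(u,x) \<in> E\<^sup>*" using conn uV x by auto
  then show ?thesis
  proof induct
    case base then show ?case by (simp add: side_refl)
  next
    case (step y z)
    show ?case
    proof (cases "(y,z) \<in> Eoff E u w")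
      case True then show ?thesis using step side_step Eoff_comm by metis
    next
      case False
      then have "(y,z) = (u,w) \<or> (y,z) = (w,u)" using step unfolding Eoff_def by auto
      then show ?thesis using step(3) A1[OF e] A1[OF ew] side_refl[of w E u] side_refl[of u E w] by auto
    qed
  qed
qed

lemma side_disj:
  assumes e: "(u,w) \<in> E" shows "side E u w \<inter> side E w u = {}"
proof (rule ccontr)
  assume "\<not> ?thesis"
  then obtain x where "x \<in> side E u w" "x \<in> side E w u" by auto
  then have "(u,x) \<in> (Eoff E u w)\<^sup>*" "(w,x) \<in> (Eoff E u w)\<^sup>*"
    unfolding side_def using Eoff_comm[of E w u] by auto
  then have "(u,w) \<in> (Eoff E u w)\<^sup>*"
    using sym_rtrancl_sw[OF sym_Eoff[OF sy]] by (meson rtrancl_trans)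
  then show False using A1[OF e] unfolding side_def by auto
qed

lemma nb_cover:
  assumes v: "v \<in> V" and x: "x \<in> V" and xv: "x \<noteq> v"
  shows "\<exists>w. (v,w) \<in> E \<and> x \<in> side E w v"
proof -
  have "(v,x) \<in> E\<^sup>*" using conn v x by auto
  then have "x = v \<or> (\<exists>w. (v,w) \<in> E \<and> x \<in> side E w v)"
  proof induct
    case base then show ?case by (rule disjI1) (rule refl)
  next
    case (step y z)
    show ?case
    proof (cases "y = v")
      case True
      then have "(v,z) \<in> E" using step(2) by simp
      then show ?thesis using side_refl[of z E v] by blast
    next
      case False
      then obtain w where w: "(v,w) \<in> E" "y \<in> side E w v" using step by auto
      have ew: "(w,v) \<in> E" using sy w by (auto dest: symD)
      show ?thesis
      proof (cases "(y,z) \<in> Eoff E w v")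
        case True
        then have "z \<in> side E w v" by (rule side_step[OF w(2)])
        then show ?thesis using w(1) by blast
      next
        case False
        then have "(y,z) = (w,v) \<or> (y,z) = (v,w)" using step(2) unfolding Eoff_def by auto
        moreover have "(y,z) \<noteq> (v,w)" using \<open>y \<noteq> v\<close> by simp
        ultimately have "z = v" by blast
        then show ?thesis by (rule disjI1)
      qed
    qed
  qed
  then show ?thesis using xv by auto
qed

lemma nb_disj:
  assumes e1: "(v,w) \<in> E" and e2: "(v,w') \<in> E" and ne: "w \<noteq> w'"
  shows "side E w v \<inter> side E w' v = {}"
proof -
  have e1': "(w,v) \<in> E" and e2': "(w',v) \<in> E" using sy e1 e2 by (auto dest: symD)
  have vw: "v \<noteq> w" using irr e1 by auto
  have w'in: "w' \<in> side E v w"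
  proof -
    have "(v,w') \<in> Eoff E v w" using e2 ne vw unfolding Eoff_def by auto
    then show ?thesis using side_step side_refl by metis
  qed
  have "side E w' v \<subseteq> side E v w"
  proof
    fix x assume "x \<in> side E w' v"
    then have "(w',x) \<in> (Eoff E w' v)\<^sup>*" unfolding side_def by auto
    then show "x \<in> side E v w"
    proof induct
      case base then show ?case by (fact w'in)
    next
      case (step y z)
      have yin: "y \<in> side E w' v" and zin: "z \<in> side E w' v"
        using step unfolding side_def by (auto intro: rtrancl_into_rtrancl)
      have "(y,z) \<in> E" using step unfolding Eoff_def by auto
      moreover have "(y,z) \<noteq> (v,w)" using yin A1[OF e2'] by auto
      moreover have "(y,z) \<noteq> (w,v)" using zin A1[OF e2'] by auto
      ultimately have "(y,z) \<in> Eoff E v w" unfolding Eoff_def by auto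
      then show ?case using step(3) side_step[of y E v w z] by blast
    qed
  qed
  then show ?thesis using side_disj[OF e1'] by auto
qed

lemma side_edges:
  assumes e: "(u,w) \<in> E"
  shows "card (E \<inter> side E w u \<times> side E w u) = 2 * (card (side E w u) - 1)"
proof -
  define A where "A = side E w u"
  define B where "B = side E u w"
  have uV: "u \<in> V" and wV: "w \<in> V" using edgeV e by auto
  have AV: "A \<subseteq> V" and BV: "B \<subseteq> V" using side_sub uV wV A_def B_def by auto
  have fA: "finite A" and fB: "finite B" using AV BV fin finite_subset by auto
  have AB: "A \<inter> B = {}" using side_disj[OF e] A_def B_def by auto
  have cov: "V = A \<union> B" using side_cover[OF e] AV BV A_def B_def by auto
  have wA: "w \<in> A" and uB: "u \<in> B" using side_refl A_def B_def by auto
  have lb: "2 * (card S - 1) \<le> card (E \<inter> S \<times> S)"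
    if S: "S = side E a b" "a \<in> V" for S a b
  proof -
    have SV: "S \<subseteq> V" using side_sub S by auto
    have cS: "\<forall>x\<in>S. (a,x) \<in> (E \<inter> S \<times> S)\<^sup>*"
    proof
      fix x assume "x \<in> S"
      then have "(a,x) \<in> (Eoff E a b)\<^sup>*" using S unfolding side_def by auto
      then show "(a,x) \<in> (E \<inter> S \<times> S)\<^sup>*"
      proof induct
        case base then show ?case by simp
      next
        case (step y z)
        have "y \<in> S" "z \<in> S" using step S unfolding side_def by (auto intro: rtrancl_into_rtrancl)
        then have "(y,z) \<in> E \<inter> S \<times> S" using step unfolding Eoff_def by auto
        then show ?case using step by (auto intro: rtrancl_into_rtrancl)
      qed
    qed
    show ?thesis
      by (rule card_conn[OF finite_subset[OF SV fin] _ _ _ cS])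
         (use S side_refl sy in \<open>auto simp: sym_def\<close>)
  qed
  have lA: "2 * (card A - 1) \<le> card (E \<inter> A \<times> A)" using lb[of A w u] A_def wV by auto
  have lB: "2 * (card B - 1) \<le> card (E \<inter> B \<times> B)" using lb[of B u w] B_def uV by auto
  have ew: "(w,u) \<in> E" using sy e by (auto dest: symD)
  have dj1: "(E \<inter> A \<times> A) \<inter> (E \<inter> B \<times> B) = {}" using AB by auto
  have dj2: "((E \<inter> A \<times> A) \<union> (E \<inter> B \<times> B)) \<inter> {(u,w),(w,u)} = {}" using AB wA uB by auto
  have ss: "(E \<inter> A \<times> A) \<union> (E \<inter> B \<times> B) \<union> {(u,w),(w,u)} \<subseteq> E" using e ew by auto
  have ne: "u \<noteq> w" using irr e by auto
  have "card ((E \<inter> A \<times> A) \<union> (E \<inter> B \<times> B) \<union> {(u,w),(w,u)})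
        = card (E \<inter> A \<times> A) + card (E \<inter> B \<times> B) + 2"
    using card_Un_disjoint[OF _ _ dj2] card_Un_disjoint[OF _ _ dj1] finE ne by simp
  then have "card (E \<inter> A \<times> A) + card (E \<inter> B \<times> B) + 2 \<le> card E"
    using card_mono[OF finE ss] by simp
  note c1 = this
  have cV: "card V = card A + card B" using cov AB card_Un_disjoint fA fB by simp
  have "card A \<noteq> 0" "card B \<noteq> 0" using wA uB fA fB by auto
  then obtain a' b' where ab: "card A = Suc a'" "card B = Suc b'"
    by (metis not0_implies_Suc)
  have "card E = 2*a' + 2*b' + 2" using cardE ab cV by simp
  moreover have "2*a' \<le> card (E \<inter> A \<times> A)" using lA ab by simp
  moreover have "2*b' \<le> card (E \<inter> B \<times> B)" using lB ab by simp
  ultimately have "card (E \<inter> A \<times> A) = 2 * a'" using c1 by linarith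
  then have "card (E \<inter> A \<times> A) = 2 * (card A - 1)" using ab by simp
  then show ?thesis by (simp only: A_def)
qed

end


lemma curve_tree:
  assumes "is_curve r s \<Delta> C" shows "tree {..<nV C} (bE C)"
  using assms unfolding is_curve_def by unfold_locales auto

lemma fiber_card:
  assumes "finite A" "finite B" "g ` A \<subseteq> B"
  shows "(\<Sum>v\<in>B. card {i\<in>A. g i = v}) = card A"
  using sum.group[OF assms, of "\<lambda>_. 1::nat"] by (simp only: card_eq_sum)

definition req :: "nat \<Rightarrow> nat \<Rightarrow> (int \<times> int) list \<Rightarrow> pcurve \<Rightarrow> nat \<Rightarrow> nat" where
  "req r s \<Delta> C v = (if typeII' r s \<Delta> C v then 2 else 0)"

definition Fv :: "nat set \<Rightarrow> pcurve \<Rightarrow> nat \<Rightarrow> nat" where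
  "Fv F C v = card {i\<in>F. endv C i = v}"

definition wgt :: "nat \<Rightarrow> nat \<Rightarrow> (int \<times> int) list \<Rightarrow> nat set \<Rightarrow> pcurve \<Rightarrow> nat \<Rightarrow> int" where
  "wgt r s \<Delta> F C v = int (req r s \<Delta> C v) - 1 - int (Fv F C v)"

definition Dv :: "nat \<Rightarrow> nat \<Rightarrow> (int \<times> int) list \<Rightarrow> nat set \<Rightarrow> pcurve \<Rightarrow> nat set \<Rightarrow> int" where
  "Dv r s \<Delta> F C S = 1 + (\<Sum>x\<in>S. wgt r s \<Delta> F C x)"

lemma broc_types:
  assumes "unor_broccoli r s \<Delta> C" "v < nV C"
  shows "typeI' r s \<Delta> C v \<or> typeII' r s \<Delta> C v \<or> typeIII' r s \<Delta> C v"
  using assms unfolding unor_broccoli_def by auto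

lemma broc_curve: "unor_broccoli r s \<Delta> C \<Longrightarrow> is_curve r s \<Delta> C"
  unfolding unor_broccoli_def by auto

lemma marks_broc:
  assumes "unor_broccoli r s \<Delta> C" "v < nV C"
  shows "marks r s C v = {} \<or> (\<exists>j<r+s. marks r s C v = {j})"
  using broc_types[OF assms] unfolding typeI'_def typeII'_def typeIII'_def by auto

lemma mark_in: "j < r + s \<Longrightarrow> j \<in> marks r s C (markv C j)"
  unfolding marks_def by auto

lemma markv_lt: "is_curve r s \<Delta> C \<Longrightarrow> j < r + s \<Longrightarrow> markv C j < nV C"
  unfolding is_curve_def by auto

lemma endv_lt: "is_curve r s \<Delta> C \<Longrightarrow> i < length \<Delta> \<Longrightarrow> endv C i < nV C"
  unfolding is_curve_def by auto

lemma markv_bij: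
  assumes b: "unor_broccoli r s \<Delta> C" and J: "J \<subseteq> {..<r+s}"
  shows "bij_betw (markv C) J {v. v < nV C \<and> (\<exists>j\<in>J. marks r s C v = {j})}"
proof -
  have c: "is_curve r s \<Delta> C" using b broc_curve by auto
  have sing: "marks r s C (markv C j) = {j}" if "j < r + s" for j
  proof -
    have lt: "markv C j < nV C" using markv_lt[OF c that] .
    have "j \<in> marks r s C (markv C j)" using mark_in[OF that] .
    then show ?thesis using marks_broc[OF b lt] by auto
  qed
  show ?thesis unfolding bij_betw_def
  proof (intro conjI)
    show "inj_on (markv C) J"
    proof (rule inj_onI)
      fix j j' assume "j \<in> J" "j' \<in> J" "markv C j = markv C j'"
      then show "j = j'" using sing[of j] sing[of j'] J by auto
    qed
    show "markv C ` J = {v. v < nV C \<and> (\<exists>j\<in>J. marks r s C v = {j})}"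
    proof (rule set_eqI, rule iffI)
      fix v assume "v \<in> markv C ` J"
      then obtain j where "j \<in> J" "v = markv C j" by auto
      then show "v \<in> {v. v < nV C \<and> (\<exists>j\<in>J. marks r s C v = {j})}"
        using sing[of j] J markv_lt[OF c, of j] by auto
    next
      fix v assume "v \<in> {v. v < nV C \<and> (\<exists>j\<in>J. marks r s C v = {j})}"
      then obtain j where "j \<in> J" "marks r s C v = {j}" by auto
      then have "markv C j = v" unfolding marks_def by auto
      then show "v \<in> markv C ` J" using \<open>j \<in> J\<close> by auto
    qed
  qed
qed

lemma typeI'_iff:
  assumes "unor_broccoli r s \<Delta> C" "v < nV C"
  shows "typeI' r s \<Delta> C v \<longleftrightarrow> (\<exists>j<r. marks r s C v = {j})"
  using broc_types[OF assms] unfolding typeI'_def typeII'_def typeIII'_def by auto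

lemma typeII'_iff:
  assumes "unor_broccoli r s \<Delta> C" "v < nV C"
  shows "typeII' r s \<Delta> C v \<longleftrightarrow> marks r s C v = {}"
  using broc_types[OF assms] unfolding typeI'_def typeII'_def typeIII'_def by auto

lemma card_flags_broc:
  assumes "unor_broccoli r s \<Delta> C" "v < nV C"
  shows "card (flags \<Delta> C v) = (if typeI' r s \<Delta> C v then 2 else 3)"
  using broc_types[OF assms] unfolding typeI'_def typeII'_def typeIII'_def by auto

lemma flags_sum:
  assumes c: "is_curve r s \<Delta> C"
  shows "(\<Sum>v<nV C. card (flags \<Delta> C v)) = card (bE C) + length \<Delta>"
proof -
  have sub: "bE C \<subseteq> {..<nV C} \<times> {..<nV C}" using c unfolding is_curve_def by auto
  have fe: "finite {w. (v,w) \<in> bE C}" for v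
    by (rule finite_subset[of _ "{..<nV C}"]) (use sub in auto)
  have cf: "card (flags \<Delta> C v) = card {w. (v,w) \<in> bE C} + card {i. i < length \<Delta> \<and> endv C i = v}" for v
  proof -
    have "card (flags \<Delta> C v) = card (Inl ` {w. (v,w) \<in> bE C} :: (nat+nat) set)
          + card (Inr ` {i. i < length \<Delta> \<and> endv C i = v} :: (nat+nat) set)"
      unfolding flags_def by (rule card_Un_disjoint) (use fe in auto)
    then show ?thesis by (simp add: card_image)
  qed
  have s1: "(\<Sum>v<nV C. card {w. (v,w) \<in> bE C}) = card (bE C)"
  proof -
    have "bE C = Sigma {..<nV C} (\<lambda>v. {w. (v,w) \<in> bE C})" using sub by auto
    then have "card (bE C) = card (Sigma {..<nV C} (\<lambda>v. {w. (v,w) \<in> bE C}))" by simp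
    also have "\<dots> = (\<Sum>v<nV C. card {w. (v,w) \<in> bE C})" by (rule card_SigmaI) (use fe in auto)
    finally show ?thesis by simp
  qed
  have s2: "(\<Sum>v<nV C. card {i. i < length \<Delta> \<and> endv C i = v}) = length \<Delta>"
    using fiber_card[of "{..<length \<Delta>}" "{..<nV C}" "endv C"] endv_lt[OF c] by auto
  show ?thesis unfolding cf sum.distrib s1 s2 ..
qed

locale bset =
  fixes r s :: nat and \<Delta> :: "(int \<times> int) list" and F :: "nat set"
  assumes Fsub: "F \<subseteq> {..<length \<Delta>}" and cnt: "r + 2 * s + card F + 1 = length \<Delta>"
begin

lemma finF: "finite F" using Fsub finite_subset by blast

lemma nV_count:
  assumes b: "unor_broccoli r s \<Delta> C"
  shows "int (nV C) = 2 * int r + 2 * int s + int (card F) - 1"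
proof -
  have c: "is_curve r s \<Delta> C" using b broc_curve by auto
  have cI: "card {v. v < nV C \<and> (\<exists>j\<in>{..<r}. marks r s C v = {j})} = r"
    using bij_betw_same_card[OF markv_bij[OF b, of "{..<r}"]] by simp
  have eqI: "{..<nV C} \<inter> {v. typeI' r s \<Delta> C v} = {v. v < nV C \<and> (\<exists>j\<in>{..<r}. marks r s C v = {j})}"
    using typeI'_iff[OF b] by auto
  have "(\<Sum>v<nV C. card (flags \<Delta> C v)) = (\<Sum>v<nV C. (if typeI' r s \<Delta> C v then 2 else 3))"
    using card_flags_broc[OF b] by (intro sum.cong) auto
  also have "\<dots> = 2 * card ({..<nV C} \<inter> {v. typeI' r s \<Delta> C v}) + 3 * card ({..<nV C} \<inter> - {v. typeI' r s \<Delta> C v})"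
    by (simp add: sum.If_cases)
  finally have e1: "(\<Sum>v<nV C. card (flags \<Delta> C v)) = 2 * r + 3 * card ({..<nV C} \<inter> - {v. typeI' r s \<Delta> C v})"
    using eqI cI by simp
  have e2: "card ({..<nV C} \<inter> {v. typeI' r s \<Delta> C v}) + card ({..<nV C} \<inter> - {v. typeI' r s \<Delta> C v}) = nV C"
    using card_Un_disjoint[of "{..<nV C} \<inter> {v. typeI' r s \<Delta> C v}" "{..<nV C} \<inter> - {v. typeI' r s \<Delta> C v}"]
    by (simp add: Int_Un_distrib[symmetric])
  have cE: "card (bE C) = 2 * (nV C - 1)" and pos: "0 < nV C" using c unfolding is_curve_def by auto
  have "2 * r + 3 * card ({..<nV C} \<inter> - {v. typeI' r s \<Delta> C v}) = 2 * (nV C - 1) + length \<Delta>"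
    using e1 flags_sum[OF c] cE by simp
  moreover obtain k where k: "nV C = Suc k" using pos by (cases "nV C") auto
  ultimately have "2 * r + 3 * card ({..<nV C} \<inter> - {v. typeI' r s \<Delta> C v}) = 2 * k + length \<Delta>" by simp
  moreover have "card ({..<nV C} \<inter> {v. typeI' r s \<Delta> C v}) = r" using eqI cI by simp
  ultimately show ?thesis using e2 cnt k by linarith
qed

lemma wgt_total:
  assumes b: "unor_broccoli r s \<Delta> C"
  shows "(\<Sum>v<nV C. wgt r s \<Delta> F C v) = -1"
proof -
  have c: "is_curve r s \<Delta> C" using b broc_curve by auto
  have cM: "card {v. v < nV C \<and> (\<exists>j\<in>{..<r+s}. marks r s C v = {j})} = r + s"
    using bij_betw_same_card[OF markv_bij[OF b, of "{..<r+s}"]] by simp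
  have eqM: "{v. v < nV C \<and> (\<exists>j\<in>{..<r+s}. marks r s C v = {j})} = {..<nV C} - {v. typeII' r s \<Delta> C v}"
  proof (rule set_eqI)
    fix x
    show "x \<in> {v. v < nV C \<and> (\<exists>j\<in>{..<r+s}. marks r s C v = {j})} \<longleftrightarrow> x \<in> {..<nV C} - {v. typeII' r s \<Delta> C v}"
    proof (cases "x < nV C")
      case True
      then show ?thesis using marks_broc[OF b True] typeII'_iff[OF b True] by auto
    qed auto
  qed
  have "(\<Sum>v<nV C. req r s \<Delta> C v) = 2 * card ({..<nV C} \<inter> {v. typeII' r s \<Delta> C v})"
    unfolding req_def by (simp add: sum.If_cases)
  moreover have "card ({..<nV C} \<inter> {v. typeII' r s \<Delta> C v}) + (r + s) = nV C"
  proof -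
    have "card ({..<nV C} \<inter> {v. typeII' r s \<Delta> C v} \<union> ({..<nV C} - {v. typeII' r s \<Delta> C v}))
        = card ({..<nV C} \<inter> {v. typeII' r s \<Delta> C v}) + card ({..<nV C} - {v. typeII' r s \<Delta> C v})"
      by (rule card_Un_disjoint) auto
    moreover have "{..<nV C} \<inter> {v. typeII' r s \<Delta> C v} \<union> ({..<nV C} - {v. typeII' r s \<Delta> C v}) = {..<nV C}"
      by auto
    ultimately have "card ({..<nV C} \<inter> {v. typeII' r s \<Delta> C v}) + card ({..<nV C} - {v. typeII' r s \<Delta> C v}) = nV C"
      by simp
    then show ?thesis using cM eqM by simp
  qed
  moreover have "(\<Sum>v<nV C. Fv F C v) = card F"
    unfolding Fv_def using fiber_card[of F "{..<nV C}" "endv C"] finF endv_lt[OF c] Fsub by auto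
  ultimately have "(\<Sum>v<nV C. wgt r s \<Delta> F C v) = 2 * (int (nV C) - int r - int s) - int (nV C) - int (card F)"
    unfolding wgt_def by (simp add: sum_subtractf of_nat_sum[symmetric] del: of_nat_sum) 
  then show ?thesis using nV_count[OF b] by simp
qed

end


definition fsc :: "real \<Rightarrow> (nat \<Rightarrow> real) \<Rightarrow> (nat \<Rightarrow> real)" where
  "fsc c f = (\<lambda>t. c * f t)"

interpretation FV: vector_space fsc
  by unfold_locales (auto simp: fsc_def fun_eq_iff algebra_simps)

lemma sum_app: "(\<Sum>x\<in>A. f x) t = (\<Sum>x\<in>A. f x t)" for f :: "'b \<Rightarrow> nat \<Rightarrow> real"
  by (induct A rule: infinite_finite_induct) auto

lemma LA:
  fixes q :: "nat \<Rightarrow> nat \<Rightarrow> real"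
  assumes hyp: "\<forall>c. (\<forall>t. (\<Sum>i\<in>{1..N}. c i * q i t) = 0) \<longrightarrow> (\<forall>i\<in>{1..N}. c i = 0)"
    and sp: "\<forall>i\<in>{1..N}. q i \<in> FV.span G" and fG: "finite G"
  shows "N \<le> card G"
proof -
  have inj: "inj_on q {1..N}"
  proof (rule inj_onI, rule ccontr)
    fix i j assume i: "i \<in> {1..N}" and j: "j \<in> {1..N}" and e: "q i = q j" and ne: "i \<noteq> j"
    define c where "c k = (if k = i then 1 else if k = j then -1 else (0::real))" for k
    have "(\<Sum>k\<in>{1..N}. c k * q k t) = 0" for t
    proof -
      have "(\<Sum>k\<in>{1..N}. c k * q k t) = (\<Sum>k\<in>{1..N}. (if k = i then q i t else 0) - (if k = j then q j t else 0))"
        by (rule sum.cong) (auto simp: c_def ne)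
      also have "\<dots> = q i t - q j t" using i j by (simp add: sum_subtractf)
      finally show ?thesis using e by simp
    qed
    then have "c i = 0" using hyp i by blast
    then show False by (simp add: c_def)
  qed
  define Q where "Q = q ` {1..N}"
  have fQ: "finite Q" unfolding Q_def by simp
  have ind: "FV.independent Q"
  proof
    assume "FV.dependent Q"
    then obtain u where u1: "\<exists>v\<in>Q. u v \<noteq> 0" and u2: "(\<Sum>v\<in>Q. fsc (u v) v) = 0"
      using FV.dependent_finite[OF fQ] by blast
    have "(\<Sum>k\<in>{1..N}. u (q k) * q k t) = 0" for t
    proof -
      have "(\<Sum>k\<in>{1..N}. u (q k) * q k t) = (\<Sum>v\<in>Q. u v * v t)"
        using sum.reindex[OF inj, of "\<lambda>v. u v * v t"] unfolding Q_def by (simp add: comp_def)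
      also have "\<dots> = (\<Sum>v\<in>Q. fsc (u v) v) t" by (simp add: sum_app fsc_def)
      finally show ?thesis using u2 by simp
    qed
    then have "\<forall>k\<in>{1..N}. u (q k) = 0" using hyp[rule_format, of "\<lambda>k. u (q k)"] by blast
    then show False using u1 unfolding Q_def by auto
  qed
  have "Q \<subseteq> FV.span G" using sp unfolding Q_def by auto
  then have "card Q \<le> card G" using FV.independent_span_bound[OF fG ind] by auto
  moreover have "card Q = N" unfolding Q_def using card_image[OF inj] by simp
  ultimately show ?thesis by simp
qed

inductive anc :: "nat set \<Rightarrow> nat \<Rightarrow> (nat \<Rightarrow> nat) \<Rightarrow> nat \<Rightarrow> nat \<Rightarrow> bool" for S u0 p where
  a1: "x \<in> S \<Longrightarrow> x \<noteq> u0 \<Longrightarrow> anc S u0 p x x"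
| a2: "x \<in> S \<Longrightarrow> x \<noteq> u0 \<Longrightarrow> anc S u0 p (p x) y \<Longrightarrow> anc S u0 p x y"

lemma anc_u0: "\<not> anc S u0 p u0 y"
  by (auto elim: anc.cases)

lemma anc_unfold: "x \<in> S \<Longrightarrow> x \<noteq> u0 \<Longrightarrow> anc S u0 p x y \<longleftrightarrow> (y = x \<or> anc S u0 p (p x) y)"
  by (auto elim: anc.cases intro: anc.intros)

lemma anc_rank:
  assumes "anc S u0 p x y" and "\<forall>z\<in>S - {u0}. ht (p z) < (ht z :: nat)"
  shows "ht y \<le> ht x"
  using assms by induct force+

lemma sum_if_insert:
  assumes "finite T" "x \<in> T" "\<not> Q x"
  shows "(\<Sum>y\<in>T. if y = x \<or> Q y then f y else (0::'a::comm_monoid_add)) = f x + (\<Sum>y\<in>T. if Q y then f y else 0)"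
proof -
  have "(\<Sum>y\<in>T. if y = x \<or> Q y then f y else 0) = f x + (\<Sum>y\<in>T - {x}. if y = x \<or> Q y then f y else 0)"
    using assms by (simp add: sum.remove)
  also have "(\<Sum>y\<in>T - {x}. if y = x \<or> Q y then f y else 0) = (\<Sum>y\<in>T - {x}. if Q y then f y else 0)"
    by (rule sum.cong) auto
  also have "\<dots> = (\<Sum>y\<in>T. if Q y then f y else 0)"
    using assms by (simp add: sum.remove)
  finally show ?thesis .
qed

lemma pos_formula:
  fixes pos b :: "nat \<Rightarrow> real \<times> real" and L :: "nat \<Rightarrow> real"
  assumes fin: "finite S" and u0: "u0 \<in> S"
    and h: "\<forall>x\<in>S - {u0}. p x \<in> S \<and> ht (p x) < (ht x :: nat) \<and> pos x = pos (p x) + L x *\<^sub>R b x"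
    and xS: "x \<in> S"
  shows "pos x = pos u0 + (\<Sum>y\<in>S - {u0}. if anc S u0 p x y then L y *\<^sub>R b y else 0)"
proof -
  have rk: "\<forall>z\<in>S - {u0}. ht (p z) < ht z" using h by auto
  have "\<forall>x. ht x = n \<longrightarrow> x \<in> S \<longrightarrow> pos x = pos u0 + (\<Sum>y\<in>S - {u0}. if anc S u0 p x y then L y *\<^sub>R b y else 0)" for n
  proof (induction n rule: less_induct)
    case (less n)
    show ?case
    proof (intro allI impI)
      fix x assume hx: "ht x = n" and xS: "x \<in> S"
      show "pos x = pos u0 + (\<Sum>y\<in>S - {u0}. if anc S u0 p x y then L y *\<^sub>R b y else 0)"
      proof (cases "x = u0")
        case True then show ?thesis by (simp add: anc_u0)
      next
        case False
        then have x: "x \<in> S - {u0}" using xS by auto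
        have px: "p x \<in> S" "ht (p x) < ht x" "pos x = pos (p x) + L x *\<^sub>R b x" using h x by auto
        have IH: "pos (p x) = pos u0 + (\<Sum>y\<in>S - {u0}. if anc S u0 p (p x) y then L y *\<^sub>R b y else 0)"
          using less.IH[of "ht (p x)"] px hx by auto
        have nx: "\<not> anc S u0 p (p x) x" using anc_rank[of S u0 p "p x" x ht] rk px(2) by auto
        have "(\<Sum>y\<in>S - {u0}. if anc S u0 p x y then L y *\<^sub>R b y else 0)
            = (\<Sum>y\<in>S - {u0}. if y = x \<or> anc S u0 p (p x) y then L y *\<^sub>R b y else 0)"
          using anc_unfold[of x S u0 p] x by (intro sum.cong) auto
        also have "\<dots> = L x *\<^sub>R b x + (\<Sum>y\<in>S - {u0}. if anc S u0 p (p x) y then L y *\<^sub>R b y else 0)"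
          by (rule sum_if_insert) (use fin x nx in auto)
        finally show ?thesis using px(3) IH by (simp add: algebra_simps)
      qed
    qed
  qed
  then show ?thesis using xS by blast
qed

lemma card_half:
  "card {t::nat. t < 2 * m \<and> P (t div 2)} = 2 * card {j. j < (m::nat) \<and> P j}"
proof (induction m)
  case 0 then show ?case by simp
next
  case (Suc m)
  have e1: "{t. t < 2 * Suc m \<and> P (t div 2)} = {t. t < 2 * m \<and> P (t div 2)} \<union> (if P m then {2*m, 2*m+1} else {})"
  proof (rule set_eqI)
    fix t :: nat
    show "t \<in> {t. t < 2 * Suc m \<and> P (t div 2)} \<longleftrightarrow> t \<in> {t. t < 2 * m \<and> P (t div 2)} \<union> (if P m then {2*m, 2*m+1} else {})"
    proof (cases "t < 2 * m")
      case True then show ?thesis by auto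
    next
      case False
      show ?thesis
      proof (cases "t = 2*m \<or> t = 2*m+1")
        case True
        then have "t div 2 = m" by auto
        then show ?thesis using True by auto
      next
        case F2: False
        then have "\<not> t < 2 * Suc m" using False by auto
        then show ?thesis using False F2 by auto
      qed
    qed
  qed
  have e2: "{j. j < Suc m \<and> P j} = {j. j < m \<and> P j} \<union> (if P m then {m} else {})"
    by (auto simp: less_Suc_eq)
  show ?case
  proof (cases "P m")
    case True
    have "card ({t. t < 2 * m \<and> P (t div 2)} \<union> {2*m, 2*m+1}) = card {t. t < 2 * m \<and> P (t div 2)} + card {2*m, 2*m+1::nat}"
      by (rule card_Un_disjoint) auto
    then have "card {t. t < 2 * Suc m \<and> P (t div 2)} = card {t. t < 2 * m \<and> P (t div 2)} + card {2*m, 2*m+1}"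
      using e1 True by simp
    moreover have "card ({j. j < m \<and> P j} \<union> {m}) = card {j. j < m \<and> P j} + card {m}"
      by (rule card_Un_disjoint) auto
    then have "card {j. j < Suc m \<and> P j} = card {j. j < m \<and> P j} + card {m}"
      using e2 True by simp
    ultimately show ?thesis using Suc by simp
  next
    case False
    then show ?thesis using e1 e2 Suc by simp
  qed
qed


definition phiF :: "real \<Rightarrow> real \<Rightarrow> real \<times> real \<Rightarrow> real" where
  "phiF a b z = a * fst z + b * snd z"

lemma phiF_add: "phiF a b (x + y) = phiF a b x + phiF a b y"
  unfolding phiF_def by (simp add: algebra_simps)
lemma phiF_diff: "phiF a b (x - y) = phiF a b x - phiF a b y"
  unfolding phiF_def by (simp add: algebra_simps)
lemma phiF_scale: "phiF a b (c *\<^sub>R x) = c * phiF a b x"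
  unfolding phiF_def by (simp add: algebra_simps)
lemma phiF_zero: "phiF a b 0 = 0"
  unfolding phiF_def by simp
lemma phiF_sum: "phiF a b (\<Sum>y\<in>A. f y) = (\<Sum>y\<in>A. phiF a b (f y))"
  by (induct A rule: infinite_finite_induct) (auto simp: phiF_add phiF_zero)

lemma cellD:
  assumes "C' \<in> cell r s \<Delta> C"
  shows "is_curve r s \<Delta> C'" "nV C' = nV C" "bE C' = bE C"
    "\<And>u w. (u,w) \<in> bE C \<Longrightarrow> bdir C' u w = bdir C u w"
    "\<And>i. i < length \<Delta> \<Longrightarrow> endv C' i = endv C i"
    "\<And>j. j < r + s \<Longrightarrow> markv C' j = markv C j"
  using assms unfolding cell_def by auto

lemma curve_edge:
  assumes "is_curve r s \<Delta> C" "(u,w) \<in> bE C"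
  shows "\<exists>l::real. l > 0 \<and>
           fst (vpos C w) - fst (vpos C u) = l * of_int (fst (bdir C u w)) \<and>
           snd (vpos C w) - snd (vpos C u) = l * of_int (snd (bdir C u w))"
proof -
  have H: "\<forall>u w. (u, w) \<in> bE C \<longrightarrow>
        bdir C u w \<noteq> (0, 0) \<and>
        bdir C w u = (- fst (bdir C u w), - snd (bdir C u w)) \<and>
        (\<exists>l::real. l > 0 \<and>
           fst (vpos C w) - fst (vpos C u) = l * of_int (fst (bdir C u w)) \<and>
           snd (vpos C w) - snd (vpos C u) = l * of_int (snd (bdir C u w)))"
    using assms(1) unfolding is_curve_def by (elim conjE) assumption
  show ?thesis using H[rule_format, OF assms(2)] by (elim conjE) assumption
qed

context bset begin

lemma gp_bound:
  assumes gpos: "gen_pos r s \<Delta> F P"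
    and c: "is_curve r s \<Delta> C" and ev: "ev_eq r s \<Delta> F C P"
    and SV: "S \<subseteq> {..<nV C}" and u0: "u0 \<in> S"
    and conS: "\<forall>x\<in>S. (u0,x) \<in> (bE C \<inter> S \<times> S)\<^sup>*"
  shows "2 * card {j. j < r + s \<and> markv C j \<in> S} + card {i\<in>F. endv C i \<in> S} \<le> card S + 1"
proof -
  define N where "N = 2*(r+s) + card F"
  define R where "R = bE C \<inter> S \<times> S"
  have finS: "finite S" using SV finite_subset by blast
  define p where "p x = (SOME y. (u0,y) \<in> R\<^sup>* \<and> (y,x) \<in> R \<and> dst R u0 y < dst R u0 x)" for x
  have pp: "p x \<in> S \<and> (p x, x) \<in> bE C \<and> dst R u0 (p x) < dst R u0 x" if "x \<in> S - {u0}" for x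
  proof -
    have "\<exists>y. (u0,y) \<in> R\<^sup>* \<and> (y,x) \<in> R \<and> dst R u0 y < dst R u0 x"
      using par_ex[of u0 x R] conS that R_def by auto
    then have "(u0,p x) \<in> R\<^sup>* \<and> (p x,x) \<in> R \<and> dst R u0 (p x) < dst R u0 x"
      unfolding p_def by (rule someI_ex)
    then show ?thesis unfolding R_def by auto
  qed
  have "dim_ge N (evvec r s \<Delta> F ` cell r s \<Delta> C)" using gpos c ev unfolding gen_pos_def N_def by blast
  then obtain pt where pt1: "\<forall>i\<le>N. pt i \<in> evvec r s \<Delta> F ` cell r s \<Delta> C"
     and pt2: "\<forall>c. (\<forall>t. (\<Sum>i\<in>{1..N}. c i * (pt i t - pt 0 t)) = 0) \<longrightarrow> (\<forall>i\<in>{1..N}. c i = 0)"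
    unfolding dim_ge_def by blast
  have "\<forall>i. \<exists>C'. i \<le> N \<longrightarrow> C' \<in> cell r s \<Delta> C \<and> pt i = evvec r s \<Delta> F C'" using pt1 by blast
  then obtain CC where CC: "\<And>i. i \<le> N \<Longrightarrow> CC i \<in> cell r s \<Delta> C \<and> pt i = evvec r s \<Delta> F (CC i)" by metis
  define Sc where "Sc = {t. t < 2*(r+s)} \<union> {t. 2*(r+s) \<le> t \<and> t - 2*(r+s) \<in> F}"
  define loc where "loc t = (if t < 2*(r+s) then markv C (t div 2) else endv C (t - 2*(r+s)))" for t
  define inA where "inA t \<longleftrightarrow> t \<in> Sc \<and> loc t \<in> S" for t
  define al where "al t = (if t < 2*(r+s) then (if even t then 1 else 0) else - real_of_int (snd (\<Delta>!(t-2*(r+s)))))" for t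
  define be where "be t = (if t < 2*(r+s) then (if even t then 0 else 1) else real_of_int (fst (\<Delta>!(t-2*(r+s)))))" for t
  define phi where "phi t = phiF (al t) (be t)" for t
  have ev_phi: "evvec r s \<Delta> F (CC i) t = phi t (vpos (CC i) (loc t))" if t: "t \<in> Sc" and i: "i \<le> N" for t i
  proof -
    have cl: "CC i \<in> cell r s \<Delta> C" using CC i by auto
    show ?thesis
    proof (cases "t < 2*(r+s)")
      case True
      then have "t div 2 < r + s" by auto
      then have "markv (CC i) (t div 2) = markv C (t div 2)" using cellD(6)[OF cl] by auto
      then show ?thesis using True unfolding evvec_def loc_def phi_def phiF_def al_def be_def by auto
    next
      case False
      then have F1: "t - 2*(r+s) \<in> F" using t Sc_def by auto
      then have "t - 2*(r+s) < length \<Delta>" using Fsub by auto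
      then have "endv (CC i) (t - 2*(r+s)) = endv C (t - 2*(r+s))" using cellD(5)[OF cl] by auto
      then show ?thesis using False F1 unfolding evvec_def loc_def phi_def phiF_def al_def be_def lineval_def
        by (auto simp: algebra_simps)
    qed
  qed
  have ev0: "evvec r s \<Delta> F C' t = 0" if "t \<notin> Sc" for t C'
    using that unfolding evvec_def Sc_def by auto
  define bv where "bv y = (real_of_int (fst (bdir C (p y) y)), real_of_int (snd (bdir C (p y) y)))" for y
  have len: "\<exists>l. vpos (CC i) y = vpos (CC i) (p y) + l *\<^sub>R bv y" if i: "i \<le> N" and y: "y \<in> S - {u0}" for i y
  proof -
    have cl: "CC i \<in> cell r s \<Delta> C" using CC i by auto
    have e: "(p y, y) \<in> bE (CC i)" using pp[OF y] cellD(3)[OF cl] by auto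
    have pe: "(p y, y) \<in> bE C" using pp[OF y] by (rule conjunct1[OF conjunct2])
    have bd: "bdir (CC i) (p y) y = bdir C (p y) y" by (rule cellD(4)[OF cl pe])
    obtain l where "fst (vpos (CC i) y) - fst (vpos (CC i) (p y)) = l * of_int (fst (bdir (CC i) (p y) y))"
      "snd (vpos (CC i) y) - snd (vpos (CC i) (p y)) = l * of_int (snd (bdir (CC i) (p y) y))"
      using curve_edge[OF cellD(1)[OF cl] e] by blast
    then have "vpos (CC i) y = vpos (CC i) (p y) + l *\<^sub>R bv y"
      unfolding bv_def bd by (simp add: prod_eq_iff algebra_simps)
    then show ?thesis by blast
  qed
  define Lf where "Lf i y = (SOME l. vpos (CC i) y = vpos (CC i) (p y) + l *\<^sub>R bv y)" for i y
  have posf: "vpos (CC i) x = vpos (CC i) u0 + (\<Sum>y\<in>S-{u0}. if anc S u0 p x y then Lf i y *\<^sub>R bv y else 0)"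
    if i: "i \<le> N" and x: "x \<in> S" for i x
  proof (rule pos_formula[OF finS u0 _ x, where ht = "dst R u0"])
    show "\<forall>x\<in>S - {u0}. p x \<in> S \<and> dst R u0 (p x) < dst R u0 x \<and> vpos (CC i) x = vpos (CC i) (p x) + Lf i x *\<^sub>R bv x"
    proof
      fix y assume y: "y \<in> S - {u0}"
      have "vpos (CC i) y = vpos (CC i) (p y) + Lf i y *\<^sub>R bv y"
        unfolding Lf_def using len[OF i y] by (rule someI_ex)
      then show "p y \<in> S \<and> dst R u0 (p y) < dst R u0 y \<and> vpos (CC i) y = vpos (CC i) (p y) + Lf i y *\<^sub>R bv y"
        using pp[OF y] by auto
    qed
  qed
  define q where "q i = (\<lambda>t. pt i t - pt 0 t)" for i
  define g1 where "g1 = (\<lambda>t. if inA t then al t else 0)"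
  define g2 where "g2 = (\<lambda>t. if inA t then be t else 0)"
  define gy where "gy y = (\<lambda>t. if inA t \<and> anc S u0 p (loc t) y then phi t (bv y) else 0)" for y
  define et where "et (t0::nat) = (\<lambda>t::nat. if t = t0 then 1 else (0::real))" for t0
  define ScB where "ScB = {t\<in>Sc. \<not> inA t}"
  define G where "G = {g1, g2} \<union> gy ` (S - {u0}) \<union> et ` ScB"
  have finSc: "finite Sc"
  proof (rule finite_subset)
    show "Sc \<subseteq> {..<2*(r+s) + length \<Delta>}" using Fsub unfolding Sc_def by auto
  qed simp
  have finScB: "finite ScB" using finSc ScB_def by auto
  have finG: "finite G" unfolding G_def using finS finScB by auto
  have span: "\<forall>i\<in>{1..N}. q i \<in> FV.span G"
  proof
    fix i assume i: "i \<in> {1..N}"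
    then have iN: "i \<le> N" and zN: "0 \<le> N" by auto
    define \<delta> where "\<delta> = vpos (CC i) u0 - vpos (CC 0) u0"
    define cc where "cc y = Lf i y - Lf 0 y" for y
    have eq: "q i = (\<Sum>t0\<in>ScB. fsc (q i t0) (et t0)) + (fsc (fst \<delta>) g1 + fsc (snd \<delta>) g2) + (\<Sum>y\<in>S-{u0}. fsc (cc y) (gy y))"
    proof (rule ext)
      fix t
      have rhs: "((\<Sum>t0\<in>ScB. fsc (q i t0) (et t0)) + (fsc (fst \<delta>) g1 + fsc (snd \<delta>) g2) + (\<Sum>y\<in>S-{u0}. fsc (cc y) (gy y))) t
        = (\<Sum>t0\<in>ScB. q i t0 * et t0 t) + (fst \<delta> * g1 t + snd \<delta> * g2 t) + (\<Sum>y\<in>S-{u0}. cc y * gy y t)"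
        by (simp add: sum_app fsc_def)
      have main: "q i t = (\<Sum>t0\<in>ScB. q i t0 * et t0 t) + (fst \<delta> * g1 t + snd \<delta> * g2 t) + (\<Sum>y\<in>S-{u0}. cc y * gy y t)"
      proof (cases "t \<in> Sc")
        case False
        have "(\<Sum>t0\<in>ScB. q i t0 * et t0 t) = 0"
          using False unfolding ScB_def et_def by (intro sum.neutral) auto
        moreover have "q i t = 0" unfolding q_def using CC[OF iN] CC[OF zN] ev0[OF False] by simp
        ultimately show ?thesis using False unfolding g1_def g2_def gy_def inA_def by simp
      next
        case True
        show ?thesis
        proof (cases "inA t")
          case False
          have "(\<Sum>t0\<in>ScB. q i t0 * et t0 t) = (\<Sum>t0\<in>ScB. if t0 = t then q i t0 else 0)"
            by (rule sum.cong) (auto simp: et_def)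
          also have "\<dots> = q i t" using False True finScB by (simp add: ScB_def)
          finally have "(\<Sum>t0\<in>ScB. q i t0 * et t0 t) = q i t" .
          then show ?thesis using False unfolding g1_def g2_def gy_def by simp
        next
          case inA: True
          have tB: "t \<notin> ScB" using inA unfolding ScB_def by auto
          have s0: "(\<Sum>t0\<in>ScB. q i t0 * et t0 t) = 0"
            using tB unfolding et_def by (intro sum.neutral) auto
          have lS: "loc t \<in> S" using inA inA_def by auto
          have "q i t = phi t (vpos (CC i) (loc t)) - phi t (vpos (CC 0) (loc t))"
            unfolding q_def using CC[OF iN] CC[OF zN] ev_phi[OF True iN] ev_phi[OF True zN] by simp
          also have "\<dots> = phi t (vpos (CC i) (loc t) - vpos (CC 0) (loc t))"
            unfolding phi_def by (simp add: phiF_diff)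
          also have "vpos (CC i) (loc t) - vpos (CC 0) (loc t)
              = \<delta> + (\<Sum>y\<in>S-{u0}. if anc S u0 p (loc t) y then cc y *\<^sub>R bv y else 0)"
          proof -
            have "(\<Sum>y\<in>S-{u0}. if anc S u0 p (loc t) y then cc y *\<^sub>R bv y else 0)
               = (\<Sum>y\<in>S-{u0}. if anc S u0 p (loc t) y then Lf i y *\<^sub>R bv y else 0)
                 - (\<Sum>y\<in>S-{u0}. if anc S u0 p (loc t) y then Lf 0 y *\<^sub>R bv y else 0)"
              unfolding sum_subtractf[symmetric] by (rule sum.cong) (auto simp: cc_def scaleR_diff_left)
            then show ?thesis unfolding posf[OF iN lS] posf[OF zN lS] \<delta>_def by (simp add: algebra_simps)
          qed
          also have "phi t (\<delta> + (\<Sum>y\<in>S-{u0}. if anc S u0 p (loc t) y then cc y *\<^sub>R bv y else 0))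
              = (fst \<delta> * al t + snd \<delta> * be t) + (\<Sum>y\<in>S-{u0}. cc y * (if anc S u0 p (loc t) y then phi t (bv y) else 0))"
          proof -
            have a: "phiF (al t) (be t) \<delta> = fst \<delta> * al t + snd \<delta> * be t"
              unfolding phiF_def by (simp add: algebra_simps)
            have b: "phiF (al t) (be t) (if anc S u0 p (loc t) y then cc y *\<^sub>R bv y else 0)
                = cc y * (if anc S u0 p (loc t) y then phiF (al t) (be t) (bv y) else 0)" for y
              by (cases "anc S u0 p (loc t) y") (simp_all add: phiF_scale phiF_zero)
            show ?thesis unfolding phi_def phiF_add phiF_sum a b ..
          qed
          finally show ?thesis using s0 inA unfolding g1_def g2_def gy_def by simp
        qed
      qed
      show "q i t = ((\<Sum>t0\<in>ScB. fsc (q i t0) (et t0)) + (fsc (fst \<delta>) g1 + fsc (snd \<delta>) g2) + (\<Sum>y\<in>S-{u0}. fsc (cc y) (gy y))) t"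
        by (rule trans[OF main rhs[symmetric]])
    qed
    have mG1: "et t0 \<in> G" if "t0 \<in> ScB" for t0
      unfolding G_def by (rule UnI2, rule imageI, rule that)
    have mG2: "gy y \<in> G" if "y \<in> S - {u0}" for y
      unfolding G_def by (rule UnI1, rule UnI2, rule imageI, rule that)
    have s1: "(\<Sum>t0\<in>ScB. fsc (q i t0) (et t0)) \<in> FV.span G"
      by (rule FV.span_sum, rule FV.span_scale, rule FV.span_base, erule mG1)
    have s2: "fsc (fst \<delta>) g1 + fsc (snd \<delta>) g2 \<in> FV.span G"
      by (intro FV.span_add FV.span_scale FV.span_base) (auto simp: G_def)
    have s3: "(\<Sum>y\<in>S-{u0}. fsc (cc y) (gy y)) \<in> FV.span G"
      by (rule FV.span_sum, rule FV.span_scale, rule FV.span_base, erule mG2)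
    have "(\<Sum>t0\<in>ScB. fsc (q i t0) (et t0)) + (fsc (fst \<delta>) g1 + fsc (snd \<delta>) g2) + (\<Sum>y\<in>S-{u0}. fsc (cc y) (gy y)) \<in> FV.span G"
      by (rule FV.span_add[OF FV.span_add[OF s1 s2] s3])
    then show "q i \<in> FV.span G" by (subst eq)
  qed
  have NG: "N \<le> card G"
    by (rule LA[OF _ span finG]) (use pt2 in \<open>simp add: q_def\<close>)
  have cG: "card G \<le> 2 + card (S - {u0}) + card ScB"
  proof -
    have c1: "card G \<le> card ({g1, g2} \<union> gy ` (S - {u0})) + card (et ` ScB)"
      unfolding G_def by (rule card_Un_le)
    have c2: "card ({g1, g2} \<union> gy ` (S - {u0})) \<le> card {g1, g2} + card (gy ` (S - {u0}))"
      by (rule card_Un_le)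
    have c3: "card {g1, g2} \<le> 2" by (cases "g1 = g2") auto
    have c4: "card (gy ` (S - {u0})) \<le> card (S - {u0})" by (rule card_image_le) (use finS in simp)
    have c5: "card (et ` ScB) \<le> card ScB" by (rule card_image_le[OF finScB])
    show ?thesis using c1 c2 c3 c4 c5 by linarith
  qed
  define ScA where "ScA = {t\<in>Sc. inA t}"
  have SAB: "Sc = ScA \<union> ScB" "ScA \<inter> ScB = {}" unfolding ScA_def ScB_def by auto
  have cSc: "card Sc = N"
  proof -
    have "Sc = {..<2*(r+s)} \<union> (\<lambda>i. i + 2*(r+s)) ` F"
      unfolding Sc_def by (auto simp: image_iff) (metis le_add_diff_inverse2)
    moreover have "card ({..<2*(r+s)} \<union> (\<lambda>i. i + 2*(r+s)) ` F) = 2*(r+s) + card F"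
      using finF by (subst card_Un_disjoint) (auto simp: card_image)
    ultimately show ?thesis unfolding N_def by simp
  qed
  have cScA: "card ScA = 2 * card {j. j < r + s \<and> markv C j \<in> S} + card {i\<in>F. endv C i \<in> S}"
  proof -
    have "ScA = {t. t < 2*(r+s) \<and> markv C (t div 2) \<in> S} \<union> (\<lambda>i. i + 2*(r+s)) ` {i\<in>F. endv C i \<in> S}"
    proof (rule set_eqI)
      fix t
      show "t \<in> ScA \<longleftrightarrow> t \<in> {t. t < 2*(r+s) \<and> markv C (t div 2) \<in> S} \<union> (\<lambda>i. i + 2*(r+s)) ` {i\<in>F. endv C i \<in> S}"
      proof (cases "t < 2*(r+s)")
        case True then show ?thesis unfolding ScA_def inA_def Sc_def loc_def by auto
      next
        case False
        then obtain k where k: "t = k + 2*(r+s)" by (metis add.commute le_Suc_ex not_less)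
        then show ?thesis unfolding ScA_def inA_def Sc_def loc_def by auto
      qed
    qed
    moreover have "card ({t. t < 2*(r+s) \<and> markv C (t div 2) \<in> S} \<union> (\<lambda>i. i + 2*(r+s)) ` {i\<in>F. endv C i \<in> S})
        = card {t. t < 2*(r+s) \<and> markv C (t div 2) \<in> S} + card {i\<in>F. endv C i \<in> S}"
      using finF by (subst card_Un_disjoint) (auto simp: card_image)
    ultimately show ?thesis using card_half[of "r+s" "\<lambda>j. markv C j \<in> S"] by simp
  qed
  have "card Sc = card ScA + card ScB" using SAB finSc by (simp add: card_Un_disjoint)
  moreover have "card (S - {u0}) + 1 = card S" using u0 finS
    by (metis Suc_eq_plus1 card_Suc_Diff1)
  ultimately show ?thesis using NG cG cSc cScA by linarith
qed

end


lemma side_conn: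
  assumes "x \<in> side E u w" shows "(u,x) \<in> (E \<inter> side E u w \<times> side E u w)\<^sup>*"
proof -
  have "(u,x) \<in> (Eoff E u w)\<^sup>*" using assms unfolding side_def by auto
  then show ?thesis
  proof induct
    case base then show ?case by simp
  next
    case (step y z)
    have "y \<in> side E u w" "z \<in> side E u w" using step unfolding side_def by (auto intro: rtrancl_into_rtrancl)
    then have "(y,z) \<in> E \<inter> side E u w \<times> side E u w" using step(2) unfolding Eoff_def by auto
    then show ?case by (rule rtrancl_into_rtrancl[OF step(3)])
  qed
qed

context bset begin

lemma sum_req:
  assumes b: "unor_broccoli r s \<Delta> C" and S: "S \<subseteq> {..<nV C}"
  shows "int (\<Sum>x\<in>S. req r s \<Delta> C x) = 2 * (int (card S) - int (card {j. j < r + s \<and> markv C j \<in> S}))"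
proof -
  have fS: "finite S" using S finite_subset by blast
  have "(\<Sum>x\<in>S. req r s \<Delta> C x) = (\<Sum>x\<in>{x\<in>S. typeII' r s \<Delta> C x}. 2)"
    unfolding req_def using sum.inter_filter[OF fS, of "\<lambda>_. 2::nat" "typeII' r s \<Delta> C"] by simp
  also have "\<dots> = 2 * card {x\<in>S. typeII' r s \<Delta> C x}" by simp
  finally have e1: "(\<Sum>x\<in>S. req r s \<Delta> C x) = 2 * card {x\<in>S. typeII' r s \<Delta> C x}" .
  define J where "J = {j. j < r + s \<and> markv C j \<in> S}"
  have bj: "bij_betw (markv C) J {v. v < nV C \<and> (\<exists>j\<in>J. marks r s C v = {j})}"
    by (rule markv_bij[OF b]) (auto simp: J_def)
  have im: "{v. v < nV C \<and> (\<exists>j\<in>J. marks r s C v = {j})} = {x\<in>S. \<not> typeII' r s \<Delta> C x}"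
  proof (rule set_eqI, rule iffI)
    fix v assume "v \<in> {v. v < nV C \<and> (\<exists>j\<in>J. marks r s C v = {j})}"
    then obtain j where v: "v < nV C" "j \<in> J" "marks r s C v = {j}" by auto
    then have "markv C j = v" unfolding marks_def by auto
    then have "v \<in> S" using v(2) J_def by auto
    then show "v \<in> {x\<in>S. \<not> typeII' r s \<Delta> C x}" using typeII'_iff[OF b v(1)] v(3) by auto
  next
    fix v assume v: "v \<in> {x\<in>S. \<not> typeII' r s \<Delta> C x}"
    then have vl: "v < nV C" using S by auto
    then have "marks r s C v \<noteq> {}" using typeII'_iff[OF b vl] v by auto
    then obtain j where j: "j < r + s" "marks r s C v = {j}" using marks_broc[OF b vl] by auto
    then have "markv C j = v" unfolding marks_def by auto
    then have "j \<in> J" using j v J_def by auto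
    then show "v \<in> {v. v < nV C \<and> (\<exists>j\<in>J. marks r s C v = {j})}" using vl j by auto
  qed
  have cJ: "card J = card {x\<in>S. \<not> typeII' r s \<Delta> C x}" using bij_betw_same_card[OF bj] im by simp
  have "card {x\<in>S. typeII' r s \<Delta> C x} + card {x\<in>S. \<not> typeII' r s \<Delta> C x} = card S"
  proof -
    have "card ({x\<in>S. typeII' r s \<Delta> C x} \<union> {x\<in>S. \<not> typeII' r s \<Delta> C x})
        = card {x\<in>S. typeII' r s \<Delta> C x} + card {x\<in>S. \<not> typeII' r s \<Delta> C x}"
      by (rule card_Un_disjoint) (use fS in auto)
    moreover have "{x\<in>S. typeII' r s \<Delta> C x} \<union> {x\<in>S. \<not> typeII' r s \<Delta> C x} = S" by auto
    ultimately show ?thesis by simp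
  qed
  then show ?thesis using e1 cJ J_def by simp
qed

lemma sum_Fv:
  assumes c: "is_curve r s \<Delta> C" and S: "S \<subseteq> {..<nV C}"
  shows "(\<Sum>x\<in>S. Fv F C x) = card {i\<in>F. endv C i \<in> S}"
proof -
  have fS: "finite S" using S finite_subset by blast
  have "(\<Sum>x\<in>S. card {i\<in>{i\<in>F. endv C i \<in> S}. endv C i = x}) = card {i\<in>F. endv C i \<in> S}"
    by (rule fiber_card) (use fS finF in auto)
  moreover have "(\<Sum>x\<in>S. Fv F C x) = (\<Sum>x\<in>S. card {i\<in>{i\<in>F. endv C i \<in> S}. endv C i = x})"
    unfolding Fv_def by (rule sum.cong) (auto intro: arg_cong[where f=card])
  ultimately show ?thesis by simp
qed

lemma Dv_formula:
  assumes b: "unor_broccoli r s \<Delta> C" and S: "S \<subseteq> {..<nV C}"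
  shows "Dv r s \<Delta> F C S = 1 + int (card S) - 2 * int (card {j. j < r + s \<and> markv C j \<in> S})
                         - int (card {i\<in>F. endv C i \<in> S})"
proof -
  have c: "is_curve r s \<Delta> C" using b broc_curve by auto
  have "Dv r s \<Delta> F C S = 1 + (int (\<Sum>x\<in>S. req r s \<Delta> C x) - int (card S) - int (\<Sum>x\<in>S. Fv F C x))"
    unfolding Dv_def wgt_def by (simp add: sum_subtractf)
  then show ?thesis using sum_req[OF b S] sum_Fv[OF c S] by simp
qed

lemma Dside_nonneg:
  assumes gpos: "gen_pos r s \<Delta> F P" and b: "unor_broccoli r s \<Delta> C" and ev: "ev_eq r s \<Delta> F C P"
    and e: "(u,w) \<in> bE C"
  shows "Dv r s \<Delta> F C (side (bE C) u w) \<ge> 0"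
proof -
  have c: "is_curve r s \<Delta> C" using b broc_curve by auto
  interpret T: tree "{..<nV C}" "bE C" by (rule curve_tree[OF c])
  have uV: "u \<in> {..<nV C}" using T.edgeV[OF e] by auto
  have S: "side (bE C) u w \<subseteq> {..<nV C}" using T.side_sub[OF uV] .
  have "2 * card {j. j < r + s \<and> markv C j \<in> side (bE C) u w} + card {i\<in>F. endv C i \<in> side (bE C) u w}
        \<le> card (side (bE C) u w) + 1"
    by (rule gp_bound[OF gpos c ev S side_refl]) (rule ballI, erule side_conn)
  then show ?thesis using Dv_formula[OF b S] by simp
qed

lemma Dside_sum:
  assumes b: "unor_broccoli r s \<Delta> C" and e: "(u,w) \<in> bE C"
  shows "Dv r s \<Delta> F C (side (bE C) u w) + Dv r s \<Delta> F C (side (bE C) w u) = 1"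
proof -
  have c: "is_curve r s \<Delta> C" using b broc_curve by auto
  interpret T: tree "{..<nV C}" "bE C" by (rule curve_tree[OF c])
  have uV: "u \<in> {..<nV C}" and wV: "w \<in> {..<nV C}" using T.edgeV[OF e] by auto
  have S1: "side (bE C) u w \<subseteq> {..<nV C}" and S2: "side (bE C) w u \<subseteq> {..<nV C}"
    using T.side_sub uV wV by auto
  have cov: "side (bE C) u w \<union> side (bE C) w u = {..<nV C}" using T.side_cover[OF e] S1 S2 by blast
  have dj: "side (bE C) u w \<inter> side (bE C) w u = {}" using T.side_disj[OF e] .
  have "(\<Sum>x<nV C. wgt r s \<Delta> F C x) = (\<Sum>x\<in>side (bE C) u w. wgt r s \<Delta> F C x) + (\<Sum>x\<in>side (bE C) w u. wgt r s \<Delta> F C x)"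
    unfolding cov[symmetric] by (rule sum.union_disjoint) (use S1 S2 finite_subset dj in auto)
  then show ?thesis using wgt_total[OF b] unfolding Dv_def by simp
qed

lemma Dnb_sum:
  assumes b: "unor_broccoli r s \<Delta> C" and x: "x < nV C"
  shows "(\<Sum>y\<in>{y. (x,y) \<in> bE C}. Dv r s \<Delta> F C (side (bE C) y x))
       = int (card {y. (x,y) \<in> bE C}) - int (req r s \<Delta> C x) + int (Fv F C x)"
proof -
  have c: "is_curve r s \<Delta> C" using b broc_curve by auto
  interpret T: tree "{..<nV C}" "bE C" by (rule curve_tree[OF c])
  define N where "N = {y. (x,y) \<in> bE C}"
  have fN: "finite N" unfolding N_def by (rule finite_subset[of _ "{..<nV C}"]) (use T.edgeV in auto)
  have Ssub: "side (bE C) y x \<subseteq> {..<nV C}" if "y \<in> N" for y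
    using T.side_sub T.edgeV that N_def by blast
  have un: "(\<Union>y\<in>N. side (bE C) y x) = {..<nV C} - {x}"
  proof
    show "(\<Union>y\<in>N. side (bE C) y x) \<subseteq> {..<nV C} - {x}"
    proof
      fix z assume "z \<in> (\<Union>y\<in>N. side (bE C) y x)"
      then obtain y where y: "y \<in> N" "z \<in> side (bE C) y x" by auto
      have "(y,x) \<in> bE C" using y(1) T.sy N_def by (auto dest: symD)
      then have "x \<notin> side (bE C) y x" by (rule T.A1)
      then show "z \<in> {..<nV C} - {x}" using y Ssub by auto
    qed
  next
    show "{..<nV C} - {x} \<subseteq> (\<Union>y\<in>N. side (bE C) y x)"
    proof
      fix z assume "z \<in> {..<nV C} - {x}"
      then obtain y where "(x,y) \<in> bE C" "z \<in> side (bE C) y x" using T.nb_cover[of x z] x by auto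
      then show "z \<in> (\<Union>y\<in>N. side (bE C) y x)" unfolding N_def by auto
    qed
  qed
  have "(\<Sum>z\<in>(\<Union>y\<in>N. side (bE C) y x). wgt r s \<Delta> F C z) = (\<Sum>y\<in>N. \<Sum>z\<in>side (bE C) y x. wgt r s \<Delta> F C z)"
  proof (rule sum.UNION_disjoint[OF fN])
    show "\<forall>y\<in>N. finite (side (bE C) y x)" using Ssub finite_subset by blast
    show "\<forall>i\<in>N. \<forall>j\<in>N. i \<noteq> j \<longrightarrow> side (bE C) i x \<inter> side (bE C) j x = {}"
      using T.nb_disj unfolding N_def by blast
  qed
  moreover have "(\<Sum>z\<in>{..<nV C} - {x}. wgt r s \<Delta> F C z) = -1 - wgt r s \<Delta> F C x"
    using wgt_total[OF b] x by (simp add: sum_diff1)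
  ultimately have "(\<Sum>y\<in>N. \<Sum>z\<in>side (bE C) y x. wgt r s \<Delta> F C z) = -1 - wgt r s \<Delta> F C x"
    using un by simp
  then show ?thesis unfolding Dv_def N_def[symmetric] wgt_def by (simp add: sum.distrib)
qed

end


lemma valid_oriD:
  assumes "valid_ori C ori"
  shows "\<And>u w. ori u w \<Longrightarrow> (u,w) \<in> bE C"
    "\<And>u w. (u,w) \<in> bE C \<Longrightarrow> ori u w \<longleftrightarrow> \<not> ori w u"
  using assms unfolding valid_ori_def by auto

lemma finite_flags:
  assumes "is_curve r s \<Delta> C" shows "finite (flags \<Delta> C v)"
proof -
  have "{w. (v,w) \<in> bE C} \<subseteq> {..<nV C}" using assms unfolding is_curve_def by auto
  then have "finite {w. (v,w) \<in> bE C}" using finite_subset by blast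
  then show ?thesis unfolding flags_def by auto
qed

context bset begin

lemma ins_eq:
  assumes c: "is_curve r s \<Delta> C" and vo: "valid_ori C ori"
  shows "ins \<Delta> F C ori x = Inl ` {y. ori y x} \<union> Inr ` {i\<in>F. endv C i = x}"
proof -
  interpret T: tree "{..<nV C}" "bE C" by (rule curve_tree[OF c])
  show ?thesis
  proof (rule set_eqI)
    fix f show "f \<in> ins \<Delta> F C ori x \<longleftrightarrow> f \<in> Inl ` {y. ori y x} \<union> Inr ` {i\<in>F. endv C i = x}"
    proof (cases f)
      case (Inl y)
      have "(x,y) \<in> bE C \<and> \<not> ori x y \<longleftrightarrow> ori y x"
      proof
        assume "(x,y) \<in> bE C \<and> \<not> ori x y" then show "ori y x" using valid_oriD(2)[OF vo, of x y] by auto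
      next
        assume o: "ori y x"
        then have e: "(y,x) \<in> bE C" using valid_oriD(1)[OF vo] by auto
        then have "(x,y) \<in> bE C" using T.sy by (auto dest: symD)
        then show "(x,y) \<in> bE C \<and> \<not> ori x y" using valid_oriD(2)[OF vo e] o by auto
      qed
      then show ?thesis using Inl unfolding ins_def flags_def outgoing_def by auto
    next
      case (Inr i)
      then show ?thesis using Fsub unfolding ins_def flags_def outgoing_def by auto
    qed
  qed
qed

lemma card_ins:
  assumes c: "is_curve r s \<Delta> C" and vo: "valid_ori C ori"
  shows "card (ins \<Delta> F C ori x) = card {y. ori y x} + Fv F C x"
proof -
  have f1: "finite {y. ori y x}"
  proof (rule finite_subset)
    show "{y. ori y x} \<subseteq> {..<nV C}" using valid_oriD(1)[OF vo] c unfolding is_curve_def by blast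
  qed simp
  have f2: "finite {i\<in>F. endv C i = x}" using finF by auto
  have "card (Inl ` {y. ori y x} \<union> Inr ` {i\<in>F. endv C i = x} :: (nat + nat) set)
      = card (Inl ` {y. ori y x} :: (nat + nat) set) + card (Inr ` {i\<in>F. endv C i = x} :: (nat + nat) set)"
    by (rule card_Un_disjoint) (use f1 f2 in auto)
  then show ?thesis unfolding ins_eq[OF c vo] Fv_def by (simp add: card_image)
qed

lemma or_unor:
  assumes "or_broccoli r s \<Delta> F (C, ori)" shows "unor_broccoli r s \<Delta> C"
  using assms unfolding or_broccoli_def unor_broccoli_def typeI_def typeII_def typeIII_def
    typeI'_def typeII'_def typeIII'_def by auto

lemma or_card_ins:
  assumes ob: "or_broccoli r s \<Delta> F (C, ori)" and x: "x < nV C"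
  shows "card (ins \<Delta> F C ori x) = req r s \<Delta> C x"
proof -
  have "typeI r s \<Delta> F C ori x \<or> typeII r s \<Delta> F C ori x \<or> typeIII r s \<Delta> F C ori x"
    using ob x unfolding or_broccoli_def by auto
  then show ?thesis unfolding req_def typeI_def typeII_def typeIII_def typeII'_def by auto
qed

lemma mult_or_un:
  assumes ob: "or_broccoli r s \<Delta> F (C, ori)"
  shows "mult_or r s \<Delta> F y (C, ori) = mult_un r s \<Delta> F y C"
proof -
  have eqv: "mV_or r s \<Delta> F C ori y v = mV_un r s \<Delta> C y v" if v: "v < nV C" for v
  proof -
    have "typeI r s \<Delta> F C ori v \<or> typeII r s \<Delta> F C ori v \<or> typeIII r s \<Delta> F C ori v"
      using ob v unfolding or_broccoli_def by auto
    then show ?thesis unfolding mV_or_def mV_un_def typeI_def typeII_def typeIII_def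
      typeI'_def typeII'_def typeIII'_def by auto
  qed
  have "(\<Prod>v<nV C. mV_or r s \<Delta> F C ori y v) = (\<Prod>v<nV C. mV_un r s \<Delta> C y v)"
    by (rule prod.cong) (auto simp: eqv)
  then show ?thesis unfolding mult_or_def mult_un_def by simp
qed

lemma ori_char:
  assumes ob: "or_broccoli r s \<Delta> F (C, ori)" and e: "(u,w) \<in> bE C"
  shows "ori u w \<longleftrightarrow> Dv r s \<Delta> F C (side (bE C) w u) = 1"
proof -
  have b: "unor_broccoli r s \<Delta> C" using or_unor[OF ob] .
  have c: "is_curve r s \<Delta> C" using b broc_curve by auto
  have vo: "valid_ori C ori" using ob unfolding or_broccoli_def by auto
  interpret T: tree "{..<nV C}" "bE C" by (rule curve_tree[OF c])
  define E where "E = bE C"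
  define A where "A = side E w u"
  have ew: "(w,u) \<in> E" using e T.sy E_def by (auto dest: symD)
  have wV: "w \<in> {..<nV C}" using T.edgeV[OF e] by auto
  have AV: "A \<subseteq> {..<nV C}" using T.side_sub[OF wV] A_def E_def by auto
  have fA: "finite A" using AV finite_subset by blast
  have wA: "w \<in> A" unfolding A_def by (rule side_refl)
  have uA: "u \<notin> A" unfolding A_def E_def by (rule T.A1[OF ew[unfolded E_def]])
  have fin_in: "finite {y. ori y x}" for x
  proof (rule finite_subset)
    show "{y. ori y x} \<subseteq> {..<nV C}" using valid_oriD(1)[OF vo] c unfolding is_curve_def by blast
  qed simp
  define Oi where "Oi = {(x,y). x \<in> A \<and> y \<in> A \<and> ori y x}"
  define Oe where "Oe = (if ori u w then {(w,u)} else {})"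
  have sig: "Sigma A (\<lambda>x. {y. ori y x}) = Oi \<union> Oe"
  proof (rule set_eqI, rule iffI)
    fix z assume "z \<in> Sigma A (\<lambda>x. {y. ori y x})"
    then obtain x y where z: "z = (x,y)" "x \<in> A" "ori y x" by auto
    show "z \<in> Oi \<union> Oe"
    proof (cases "y \<in> A")
      case True then show ?thesis using z Oi_def by auto
    next
      case False
      have yx: "(y,x) \<in> E" using valid_oriD(1)[OF vo z(3)] E_def by auto
      have "(y,x) \<notin> Eoff E w u"
      proof
        assume "(y,x) \<in> Eoff E w u"
        then have "y \<in> A" using side_step_back[OF T.sy[folded E_def] z(2)[unfolded A_def]] A_def by auto
        then show False using False by auto
      qed
      then have "(y,x) = (w,u) \<or> (y,x) = (u,w)" using yx unfolding Eoff_def by auto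
      moreover have "(y,x) \<noteq> (w,u)" using uA z(2) by auto
      ultimately have "y = u" "x = w" by auto
      then show ?thesis using z Oe_def by auto
    qed
  next
    fix z assume "z \<in> Oi \<union> Oe"
    then show "z \<in> Sigma A (\<lambda>x. {y. ori y x})" using wA unfolding Oi_def Oe_def by (auto split: if_splits)
  qed
  have fOi: "finite Oi" unfolding Oi_def by (rule finite_subset[of _ "A \<times> A"]) (use fA in auto)
  have djO: "Oi \<inter> Oe = {}" using uA unfolding Oi_def Oe_def by auto
  define H where "H = {(y,x). (y,x) \<in> E \<and> y \<in> A \<and> x \<in> A \<and> ori y x}"
  define H' where "H' = {(y,x). (y,x) \<in> E \<and> y \<in> A \<and> x \<in> A \<and> ori x y}"
  have EA: "E \<inter> A \<times> A = H \<union> H'"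
    unfolding H_def H'_def using valid_oriD(2)[OF vo] E_def by auto
  have djH: "H \<inter> H' = {}" unfolding H_def H'_def using valid_oriD(2)[OF vo] E_def by auto
  have H'sw: "H' = prod.swap ` H"
  proof (rule set_eqI, rule iffI)
    fix z assume "z \<in> H'"
    then obtain y x where z: "z = (y,x)" "(y,x) \<in> E" "y \<in> A" "x \<in> A" "ori x y" unfolding H'_def by auto
    have "(x,y) \<in> E" using z(2) T.sy E_def by (auto dest: symD)
    then have "(x,y) \<in> H" using z unfolding H_def by auto
    then show "z \<in> prod.swap ` H" using z(1) by (auto intro: image_eqI[where x="(x,y)"])
  next
    fix z assume "z \<in> prod.swap ` H"
    then obtain x y where z: "z = (y,x)" "(x,y) \<in> E" "y \<in> A" "x \<in> A" "ori x y" unfolding H_def by auto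
    have "(y,x) \<in> E" using z(2) T.sy E_def by (auto dest: symD)
    then show "z \<in> H'" using z unfolding H'_def by auto
  qed
  have fH: "finite H" unfolding H_def by (rule finite_subset[of _ "A \<times> A"]) (use fA in auto)
  have cH': "card H' = card H" unfolding H'sw by (rule card_image, rule inj_onI) (metis swap_swap)
  have cEA: "card (E \<inter> A \<times> A) = 2 * (card A - 1)"
    using T.side_edges[OF e] unfolding A_def E_def .
  have "card (E \<inter> A \<times> A) = card H + card H'"
    unfolding EA by (rule card_Un_disjoint[OF fH _ djH]) (use fH H'sw in auto)
  then have cH: "card H = card A - 1" using cEA cH' by simp
  have cOi: "card Oi = card H"
  proof -
    have "Oi = prod.swap ` H" unfolding Oi_def H_def using valid_oriD(1)[OF vo] E_def
      by (auto simp: image_iff)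
    moreover have "inj_on prod.swap H" by (rule inj_onI) (metis swap_swap)
    ultimately show ?thesis by (simp add: card_image)
  qed
  have "(\<Sum>x\<in>A. card {y. ori y x}) = card (Sigma A (\<lambda>x. {y. ori y x}))"
    by (rule card_SigmaI[symmetric]) (use fA fin_in in auto)
  also have "\<dots> = card Oi + card Oe" unfolding sig by (rule card_Un_disjoint[OF fOi _ djO]) (simp add: Oe_def)
  finally have s1: "(\<Sum>x\<in>A. card {y. ori y x}) = (card A - 1) + (if ori u w then 1 else 0)"
    using cOi cH by (simp add: Oe_def)
  have s2: "(\<Sum>x\<in>A. card (ins \<Delta> F C ori x)) = (\<Sum>x\<in>A. req r s \<Delta> C x)"
    using or_card_ins[OF ob] AV by (intro sum.cong) auto
  have s3: "(\<Sum>x\<in>A. card (ins \<Delta> F C ori x)) = (\<Sum>x\<in>A. card {y. ori y x}) + (\<Sum>x\<in>A. Fv F C x)"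
    using card_ins[OF c vo] by (simp add: sum.distrib)
  have "card A \<noteq> 0" using wA fA by auto
  then obtain k where k: "card A = Suc k" by (cases "card A") auto
  define a where "a = (\<Sum>x\<in>A. req r s \<Delta> C x)"
  define f where "f = (\<Sum>x\<in>A. Fv F C x)"
  define bb where "bb = (if ori u w then 1 else (0::nat))"
  have key: "k + bb + f = a" using s1 s2 s3 k unfolding a_def f_def bb_def by linarith
  have "Dv r s \<Delta> F C A = 1 + int a - int (card A) - int f"
    unfolding Dv_def wgt_def a_def f_def by (simp add: sum_subtractf del: of_nat_sum add: of_nat_sum[symmetric])
  also have "\<dots> = int bb" using key k by simp
  finally have "Dv r s \<Delta> F C A = (if ori u w then 1 else 0)" unfolding bb_def by simp
  then show ?thesis unfolding A_def E_def by simp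
qed

lemma ori_unique:
  assumes "or_broccoli r s \<Delta> F (C, o1)" "or_broccoli r s \<Delta> F (C, o2)"
  shows "o1 = o2"
proof (intro ext)
  fix u w
  have v1: "valid_ori C o1" and v2: "valid_ori C o2" using assms unfolding or_broccoli_def by auto
  show "o1 u w = o2 u w"
  proof (cases "(u,w) \<in> bE C")
    case True then show ?thesis using ori_char[OF assms(1) True] ori_char[OF assms(2) True] by simp
  next
    case False then show ?thesis using valid_oriD(1)[OF v1] valid_oriD(1)[OF v2] by auto
  qed
qed

end


context bset begin

definition ori0 :: "pcurve \<Rightarrow> nat \<Rightarrow> nat \<Rightarrow> bool" where
  "ori0 C u w \<longleftrightarrow> (u,w) \<in> bE C \<and> Dv r s \<Delta> F C (side (bE C) w u) = 1"

lemma ex_ori: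
  assumes gpos: "gen_pos r s \<Delta> F P" and b: "unor_broccoli r s \<Delta> C" and ev: "ev_eq r s \<Delta> F C P"
  shows "or_broccoli r s \<Delta> F (C, ori0 C)"
proof -
  have c: "is_curve r s \<Delta> C" using b broc_curve by auto
  interpret T: tree "{..<nV C}" "bE C" by (rule curve_tree[OF c])
  have Dc: "Dv r s \<Delta> F C (side (bE C) w u) = 1 - Dv r s \<Delta> F C (side (bE C) u w)"
    "Dv r s \<Delta> F C (side (bE C) u w) \<ge> 0" "Dv r s \<Delta> F C (side (bE C) w u) \<ge> 0"
    if e: "(u,w) \<in> bE C" for u w
  proof -
    have ew: "(w,u) \<in> bE C" using e T.sy by (auto dest: symD)
    show "Dv r s \<Delta> F C (side (bE C) w u) = 1 - Dv r s \<Delta> F C (side (bE C) u w)"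
      using Dside_sum[OF b e] by simp
    show "Dv r s \<Delta> F C (side (bE C) u w) \<ge> 0" by (rule Dside_nonneg[OF gpos b ev e])
    show "Dv r s \<Delta> F C (side (bE C) w u) \<ge> 0" by (rule Dside_nonneg[OF gpos b ev ew])
  qed
  have vo: "valid_ori C (ori0 C)"
    unfolding valid_ori_def
  proof (intro conjI allI impI)
    fix u w assume "ori0 C u w" then show "(u,w) \<in> bE C" unfolding ori0_def by auto
  next
    fix u w assume e: "(u,w) \<in> bE C"
    have ew: "(w,u) \<in> bE C" using e T.sy by (auto dest: symD)
    show "ori0 C u w \<longleftrightarrow> \<not> ori0 C w u"
      unfolding ori0_def using Dc[OF e] e ew by auto
  qed
  have cins: "card (ins \<Delta> F C (ori0 C) x) = req r s \<Delta> C x" if x: "x < nV C" for x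
  proof -
    define N where "N = {y. (x,y) \<in> bE C}"
    have fN: "finite N" unfolding N_def by (rule finite_subset[of _ "{..<nV C}"]) (use T.edgeV in auto)
    define Z where "Z = {y\<in>N. Dv r s \<Delta> F C (side (bE C) y x) = 0}"
    define O1 where "O1 = {y\<in>N. Dv r s \<Delta> F C (side (bE C) y x) = 1}"
    have d01: "Dv r s \<Delta> F C (side (bE C) y x) = 0 \<or> Dv r s \<Delta> F C (side (bE C) y x) = 1" if "y \<in> N" for y
    proof -
      have e: "(x,y) \<in> bE C" using that N_def by auto
      show ?thesis using Dc[OF e] by auto
    qed
    have inset: "{y. ori0 C y x} = Z"
    proof (rule set_eqI)
      fix y
      show "y \<in> {y. ori0 C y x} \<longleftrightarrow> y \<in> Z"
      proof (cases "(x,y) \<in> bE C")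
        case True
        have ey: "(y,x) \<in> bE C" using True T.sy by (auto dest: symD)
        show ?thesis unfolding ori0_def Z_def N_def using Dc[OF True] ey True by auto
      next
        case False
        have "(y,x) \<notin> bE C" using False T.sy by (auto dest: symD)
        then show ?thesis unfolding ori0_def Z_def N_def using False by auto
      qed
    qed
    have sD: "(\<Sum>y\<in>N. Dv r s \<Delta> F C (side (bE C) y x)) = int (card O1)"
    proof -
      have "(\<Sum>y\<in>N. Dv r s \<Delta> F C (side (bE C) y x)) = (\<Sum>y\<in>N. if Dv r s \<Delta> F C (side (bE C) y x) = 1 then 1 else 0)"
        by (rule sum.cong) (use d01 in auto)
      also have "\<dots> = (\<Sum>y\<in>O1. 1)" unfolding O1_def using sum.inter_filter[OF fN, of "\<lambda>_. 1::int"] by simp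
      finally show ?thesis by simp
    qed
    have cZO: "card Z + card O1 = card N"
    proof -
      have "card (Z \<union> O1) = card Z + card O1"
        by (rule card_Un_disjoint) (auto simp: Z_def O1_def intro: finite_subset[OF _ fN])
      moreover have "Z \<union> O1 = N" using d01 unfolding Z_def O1_def by auto
      ultimately show ?thesis by simp
    qed
    have "int (card O1) = int (card N) - int (req r s \<Delta> C x) + int (Fv F C x)"
      using Dnb_sum[OF b x] sD unfolding N_def by simp
    then have "card Z + Fv F C x = req r s \<Delta> C x" using cZO by linarith
    then show ?thesis using card_ins[OF c vo] inset by simp
  qed
  have fins: "finite (ins \<Delta> F C (ori0 C) x)" for x
    using finite_flags[OF c] unfolding ins_def by auto
  show ?thesis unfolding or_broccoli_def
  proof (simp only: prod.case, intro conjI c vo allI impI)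
    fix v assume v: "v < nV C"
    show "typeI r s \<Delta> F C (ori0 C) v \<or> typeII r s \<Delta> F C (ori0 C) v \<or> typeIII r s \<Delta> F C (ori0 C) v"
      using broc_types[OF b v]
    proof (elim disjE)
      assume t: "typeI' r s \<Delta> C v"
      then have "req r s \<Delta> C v = 0" unfolding req_def typeI'_def typeII'_def by auto
      then have "ins \<Delta> F C (ori0 C) v = {}" using cins[OF v] fins by simp
      then show ?thesis using t unfolding typeI_def typeI'_def by auto
    next
      assume t: "typeII' r s \<Delta> C v"
      then have "req r s \<Delta> C v = 2" unfolding req_def by auto
      then have "card (ins \<Delta> F C (ori0 C) v) = 2" using cins[OF v] by simp
      then show ?thesis using t unfolding typeII_def typeII'_def by auto
    next
      assume t: "typeIII' r s \<Delta> C v"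
      then have "req r s \<Delta> C v = 0" unfolding req_def typeIII'_def typeII'_def by auto
      then have "ins \<Delta> F C (ori0 C) v = {}" using cins[OF v] fins by simp
      then show ?thesis using t unfolding typeIII_def typeIII'_def by auto
    qed
  qed
qed

end


locale isoc =
  fixes r s :: nat and \<Delta> :: "(int \<times> int) list" and C C' :: pcurve and \<sigma> :: "nat \<Rightarrow> nat"
  assumes iso: "curve_iso r s \<Delta> C C' \<sigma>" and c: "is_curve r s \<Delta> C"
begin

lemma bij: "bij_betw \<sigma> {..<nV C} {..<nV C'}" using iso unfolding curve_iso_def by auto
lemma inj: "inj_on \<sigma> {..<nV C}" by (rule bij_betw_imp_inj_on[OF bij])
lemma img: "\<sigma> ` {..<nV C} = {..<nV C'}" by (rule bij_betw_imp_surj_on[OF bij])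
lemma bE': "bE C' = (\<lambda>(u,w). (\<sigma> u, \<sigma> w)) ` bE C" using iso unfolding curve_iso_def by auto
lemma bdir': "(u,w) \<in> bE C \<Longrightarrow> bdir C' (\<sigma> u) (\<sigma> w) = bdir C u w" using iso unfolding curve_iso_def by auto
lemma endv': "i < length \<Delta> \<Longrightarrow> endv C' i = \<sigma> (endv C i)" using iso unfolding curve_iso_def by auto
lemma markv': "j < r + s \<Longrightarrow> markv C' j = \<sigma> (markv C j)" using iso unfolding curve_iso_def by auto
lemma subE: "bE C \<subseteq> {..<nV C} \<times> {..<nV C}" using c unfolding is_curve_def by auto
lemma eqv: "u < nV C \<Longrightarrow> w < nV C \<Longrightarrow> \<sigma> u = \<sigma> w \<longleftrightarrow> u = w" using inj inj_on_eq_iff by fastforce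

lemma edge_iff: "u < nV C \<Longrightarrow> w < nV C \<Longrightarrow> (\<sigma> u, \<sigma> w) \<in> bE C' \<longleftrightarrow> (u,w) \<in> bE C"
proof
  assume u: "u < nV C" and w: "w < nV C" and "(\<sigma> u, \<sigma> w) \<in> bE C'"
  then obtain a b where ab: "(a,b) \<in> bE C" "\<sigma> a = \<sigma> u" "\<sigma> b = \<sigma> w" unfolding bE' by auto
  have "a < nV C" "b < nV C" using ab(1) subE by auto
  then show "(u,w) \<in> bE C" using ab eqv u w by auto
next
  assume "(u,w) \<in> bE C" then show "(\<sigma> u, \<sigma> w) \<in> bE C'" unfolding bE' by auto
qed

lemma nbrs: "v < nV C \<Longrightarrow> {x. (\<sigma> v, x) \<in> bE C'} = \<sigma> ` {w. (v,w) \<in> bE C}"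
proof (rule set_eqI, rule iffI)
  fix x assume v: "v < nV C" and "x \<in> {x. (\<sigma> v, x) \<in> bE C'}"
  then obtain a b where ab: "(a,b) \<in> bE C" "\<sigma> a = \<sigma> v" "\<sigma> b = x" unfolding bE' by auto
  have "a < nV C" using ab(1) subE by auto
  then have "a = v" using ab eqv v by auto
  then show "x \<in> \<sigma> ` {w. (v,w) \<in> bE C}" using ab by auto
next
  fix x assume "v < nV C" "x \<in> \<sigma> ` {w. (v,w) \<in> bE C}"
  then show "x \<in> {x. (\<sigma> v, x) \<in> bE C'}" unfolding bE' by auto
qed

lemma ends: "v < nV C \<Longrightarrow> {i. i < length \<Delta> \<and> endv C' i = \<sigma> v} = {i. i < length \<Delta> \<and> endv C i = v}"
  using endv' eqv c unfolding is_curve_def by auto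

lemma flags': "v < nV C \<Longrightarrow> flags \<Delta> C' (\<sigma> v) = map_sum \<sigma> id ` flags \<Delta> C v"
  unfolding flags_def using nbrs ends by (simp add: image_Un image_image)

lemma flagsV: "f \<in> flags \<Delta> C v \<Longrightarrow> (case f of Inl w \<Rightarrow> w < nV C | Inr i \<Rightarrow> True)"
  unfolding flags_def using subE by auto

lemma inj_flags: "v < nV C \<Longrightarrow> inj_on (map_sum \<sigma> id) (flags \<Delta> C v)"
proof (rule inj_onI)
  fix f g assume v: "v < nV C" and f: "f \<in> flags \<Delta> C v" and g: "g \<in> flags \<Delta> C v"
    and e: "map_sum \<sigma> id f = map_sum \<sigma> id g"
  show "f = g"
    using flagsV[OF f] flagsV[OF g] e eqv by (cases f; cases g) auto
qed

lemma card_flags': "v < nV C \<Longrightarrow> card (flags \<Delta> C' (\<sigma> v)) = card (flags \<Delta> C v)"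
  using flags' inj_flags card_image by metis

lemma marks': "v < nV C \<Longrightarrow> marks r s C' (\<sigma> v) = marks r s C v"
  unfolding marks_def using markv' eqv markv_lt[OF c] by auto

lemma odir': "v < nV C \<Longrightarrow> f \<in> flags \<Delta> C v \<Longrightarrow> odir \<Delta> C' (\<sigma> v) (map_sum \<sigma> id f) = odir \<Delta> C v f"
  unfolding odir_def flags_def using bdir' by auto

lemma mikh': "v < nV C \<Longrightarrow> mikh \<Delta> C' (\<sigma> v) = mikh \<Delta> C v"
proof -
  assume v: "v < nV C"
  have "{nat \<bar>det2 (odir \<Delta> C' (\<sigma> v) f) (odir \<Delta> C' (\<sigma> v) g)\<bar> | f g.
          f \<in> flags \<Delta> C' (\<sigma> v) \<and> g \<in> flags \<Delta> C' (\<sigma> v) \<and> f \<noteq> g}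
      = {nat \<bar>det2 (odir \<Delta> C v f) (odir \<Delta> C v g)\<bar> | f g.
          f \<in> flags \<Delta> C v \<and> g \<in> flags \<Delta> C v \<and> f \<noteq> g}" (is "?L = ?R")
  proof (rule set_eqI, rule iffI)
    fix z assume "z \<in> ?L"
    then obtain f g where fg: "z = nat \<bar>det2 (odir \<Delta> C' (\<sigma> v) f) (odir \<Delta> C' (\<sigma> v) g)\<bar>"
      "f \<in> flags \<Delta> C' (\<sigma> v)" "g \<in> flags \<Delta> C' (\<sigma> v)" "f \<noteq> g" by blast
    obtain f0 where f0: "f0 \<in> flags \<Delta> C v" "f = map_sum \<sigma> id f0" using fg(2) flags'[OF v] by auto
    obtain g0 where g0: "g0 \<in> flags \<Delta> C v" "g = map_sum \<sigma> id g0" using fg(3) flags'[OF v] by auto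
    have "f0 \<noteq> g0" using fg(4) f0 g0 by auto
    moreover have "z = nat \<bar>det2 (odir \<Delta> C v f0) (odir \<Delta> C v g0)\<bar>"
      using fg(1) f0 g0 odir'[OF v] by simp
    ultimately show "z \<in> ?R" using f0 g0 by blast
  next
    fix z assume "z \<in> ?R"
    then obtain f g where fg: "z = nat \<bar>det2 (odir \<Delta> C v f) (odir \<Delta> C v g)\<bar>"
      "f \<in> flags \<Delta> C v" "g \<in> flags \<Delta> C v" "f \<noteq> g" by blast
    have "map_sum \<sigma> id f \<noteq> map_sum \<sigma> id g" using inj_flags[OF v] fg(2-4) inj_on_eq_iff by metis
    moreover have "map_sum \<sigma> id f \<in> flags \<Delta> C' (\<sigma> v)" "map_sum \<sigma> id g \<in> flags \<Delta> C' (\<sigma> v)"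
      using fg flags'[OF v] by auto
    moreover have "z = nat \<bar>det2 (odir \<Delta> C' (\<sigma> v) (map_sum \<sigma> id f)) (odir \<Delta> C' (\<sigma> v) (map_sum \<sigma> id g))\<bar>"
      using fg odir'[OF v] by simp
    ultimately show "z \<in> ?L" by blast
  qed
  then show ?thesis unfolding mikh_def by simp
qed

lemma mV_un': assumes v: "v < nV C" shows "mV_un r s \<Delta> C' y (\<sigma> v) = mV_un r s \<Delta> C y v"
  unfolding mV_un_def typeI'_def typeII'_def typeIII'_def using card_flags'[OF v] marks'[OF v] mikh'[OF v] by auto

lemma mult_un': "mult_un r s \<Delta> F y C' = mult_un r s \<Delta> F y C"
proof -
  have "(\<Prod>v<nV C'. mV_un r s \<Delta> C' y v) = (\<Prod>v\<in>\<sigma> ` {..<nV C}. mV_un r s \<Delta> C' y v)" using img by simp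
  also have "\<dots> = (\<Prod>v<nV C. mV_un r s \<Delta> C' y (\<sigma> v))" by (rule prod.reindex[OF inj, unfolded comp_def])
  also have "\<dots> = (\<Prod>v<nV C. mV_un r s \<Delta> C y v)" by (rule prod.cong) (auto simp: mV_un')
  finally show ?thesis unfolding mult_un_def by simp
qed

definition tr :: "(nat \<Rightarrow> nat \<Rightarrow> bool) \<Rightarrow> nat \<Rightarrow> nat \<Rightarrow> bool" where
  "tr ori a b \<longleftrightarrow> (\<exists>u w. (u,w) \<in> bE C \<and> a = \<sigma> u \<and> b = \<sigma> w \<and> ori u w)"

lemma tr_app: "(u,w) \<in> bE C \<Longrightarrow> tr ori (\<sigma> u) (\<sigma> w) \<longleftrightarrow> ori u w"
proof
  assume e: "(u,w) \<in> bE C" and "tr ori (\<sigma> u) (\<sigma> w)"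
  then obtain u' w' where h: "(u',w') \<in> bE C" "\<sigma> u = \<sigma> u'" "\<sigma> w = \<sigma> w'" "ori u' w'" unfolding tr_def by auto
  have "u < nV C" "w < nV C" "u' < nV C" "w' < nV C" using e h(1) subE by auto
  then show "ori u w" using h eqv by auto
next
  assume "(u,w) \<in> bE C" "ori u w" then show "tr ori (\<sigma> u) (\<sigma> w)" unfolding tr_def by auto
qed

lemma tr_valid: "valid_ori C ori \<Longrightarrow> valid_ori C' (tr ori)"
  unfolding valid_ori_def
proof (intro conjI allI impI)
  fix a b assume "tr ori a b" then show "(a,b) \<in> bE C'" unfolding tr_def bE' by auto
next
  fix a b assume vo: "(\<forall>u w. ori u w \<longrightarrow> (u, w) \<in> bE C) \<and> (\<forall>u w. (u, w) \<in> bE C \<longrightarrow> ori u w = (\<not> ori w u))"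
    and e: "(a,b) \<in> bE C'"
  then obtain u w where uw: "(u,w) \<in> bE C" "a = \<sigma> u" "b = \<sigma> w" unfolding bE' by auto
  have "u < nV C" "w < nV C" using uw subE by auto
  have "sym (bE C)" using c unfolding is_curve_def by auto
  then have wu: "(w,u) \<in> bE C" using uw(1) by (rule symD)
  show "tr ori a b \<longleftrightarrow> \<not> tr ori b a" using tr_app[OF uw(1)] tr_app[OF wu] uw vo by auto
qed

lemma ins': "v < nV C \<Longrightarrow> ins \<Delta> F C' (tr ori) (\<sigma> v) = map_sum \<sigma> id ` ins \<Delta> F C ori v"
proof -
  assume v: "v < nV C"
  have "outgoing F (tr ori) (\<sigma> v) (map_sum \<sigma> id f) = outgoing F ori v f" if "f \<in> flags \<Delta> C v" for f
    using that tr_app unfolding outgoing_def flags_def by auto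
  then show ?thesis unfolding ins_def flags'[OF v] by auto
qed

lemma card_ins': "v < nV C \<Longrightarrow> card (ins \<Delta> F C' (tr ori) (\<sigma> v)) = card (ins \<Delta> F C ori v)"
proof -
  assume v: "v < nV C"
  have "inj_on (map_sum \<sigma> id) (ins \<Delta> F C ori v)"
    by (rule inj_on_subset[OF inj_flags[OF v]]) (auto simp: ins_def)
  then show ?thesis unfolding ins'[OF v] by (rule card_image)
qed

lemma ins_empty': "v < nV C \<Longrightarrow> ins \<Delta> F C' (tr ori) (\<sigma> v) = {} \<longleftrightarrow> ins \<Delta> F C ori v = {}"
  using ins' by simp

lemma tr_broc: "or_broccoli r s \<Delta> F (C, ori) \<Longrightarrow> is_curve r s \<Delta> C' \<Longrightarrow> or_broccoli r s \<Delta> F (C', tr ori)"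
proof -
  assume ob: "or_broccoli r s \<Delta> F (C, ori)" and c': "is_curve r s \<Delta> C'"
  have vo: "valid_ori C ori" using ob unfolding or_broccoli_def by auto
  show ?thesis unfolding or_broccoli_def
  proof (simp only: prod.case, intro conjI c' tr_valid[OF vo] allI impI)
    fix a assume "a < nV C'"
    then obtain v where v: "v < nV C" "a = \<sigma> v" using img by auto
    have "typeI r s \<Delta> F C ori v \<or> typeII r s \<Delta> F C ori v \<or> typeIII r s \<Delta> F C ori v"
      using ob v unfolding or_broccoli_def by auto
    then show "typeI r s \<Delta> F C' (tr ori) a \<or> typeII r s \<Delta> F C' (tr ori) a \<or> typeIII r s \<Delta> F C' (tr ori) a"
      unfolding v(2) typeI_def typeII_def typeIII_def
      using card_flags'[OF v(1)] marks'[OF v(1)] card_ins'[OF v(1)] ins_empty'[OF v(1)] by simp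
  qed
qed

end


lemma iso_refl: "curve_iso r s \<Delta> C C id"
  unfolding curve_iso_def by (auto simp: bij_betw_def image_iff)

theorem corollary3p16:
  fixes r s :: nat and \<Delta> :: "(int \<times> int) list" and F :: "nat set" and P :: conds and y :: real
  assumes "\<forall>i < length \<Delta>. \<Delta> ! i \<noteq> (0, 0)"
    and "F \<subseteq> {..<length \<Delta>}"
    and "r + 2 * s + card F + 1 = length \<Delta>"
    and "gen_pos r s \<Delta> F P"
    and "y > 0" and "y \<noteq> 1"
  shows "N_urB r s y \<Delta> F P = N_rB r s y \<Delta> F P"
proof -
  interpret B: bset r s \<Delta> F using assms(2,3) by unfold_locales
  have gpos: "gen_pos r s \<Delta> F P" by (rule assms(4))
  define Au where "Au = urB_curves r s \<Delta> F P"
  define Ru where "Ru = iso_un r s \<Delta> \<inter> Au \<times> Au"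
  define Ao where "Ao = rB_curves r s \<Delta> F P"
  define Ro where "Ro = iso_or r s \<Delta> \<inter> Ao \<times> Ao"
  have Au_iff: "C \<in> Au \<longleftrightarrow> unor_broccoli r s \<Delta> C \<and> ev_eq r s \<Delta> F C P" for C
    unfolding Au_def urB_curves_def by auto
  have Ao_iff: "(C,orr) \<in> Ao \<longleftrightarrow> or_broccoli r s \<Delta> F (C,orr) \<and> ev_eq r s \<Delta> F C P" for C orr
    unfolding Ao_def rB_curves_def by auto
  have k1: "(C, B.ori0 C) \<in> Ao" if "C \<in> Au" for C
    using B.ex_ori[OF gpos] that Au_iff Ao_iff by auto
  have k2: "C \<in> Au" if "(C,orr) \<in> Ao" for C orr
    using B.or_unor that Au_iff Ao_iff by auto
  have k3: "orr = B.ori0 C" if "(C,orr) \<in> Ao" for C orr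
  proof -
    have "(C, B.ori0 C) \<in> Ao" using k1 k2 that by auto
    then show ?thesis using B.ori_unique that Ao_iff by auto
  qed
  have curv: "is_curve r s \<Delta> C" if "C \<in> Au" for C
    using that Au_iff broc_curve by auto
  have k4: "((C0, B.ori0 C0),(C, B.ori0 C)) \<in> iso_or r s \<Delta>"
    if C0: "C0 \<in> Au" and C: "C \<in> Au" and i: "(C0,C) \<in> iso_un r s \<Delta>" for C0 C
  proof -
    obtain \<sigma> where \<sigma>: "curve_iso r s \<Delta> C0 C \<sigma>" using i unfolding iso_un_def by auto
    interpret J: isoc r s \<Delta> C0 C \<sigma> using \<sigma> curv[OF C0] by unfold_locales
    have ob0: "or_broccoli r s \<Delta> F (C0, B.ori0 C0)" using k1[OF C0] Ao_iff by auto
    have ob: "or_broccoli r s \<Delta> F (C, B.ori0 C)" using k1[OF C] Ao_iff by auto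
    have "or_broccoli r s \<Delta> F (C, J.tr (B.ori0 C0))" by (rule J.tr_broc[OF ob0 curv[OF C]])
    then have eqo: "J.tr (B.ori0 C0) = B.ori0 C" using B.ori_unique ob by blast
    have "\<forall>(u, w)\<in>bE C0. B.ori0 C (\<sigma> u) (\<sigma> w) = B.ori0 C0 u w"
      using J.tr_app[of _ _ "B.ori0 C0"] unfolding eqo by auto
    then show ?thesis unfolding iso_or_def using \<sigma> by auto
  qed
  have k5: "mult_un r s \<Delta> F y C = mult_un r s \<Delta> F y C0"
    if C0: "C0 \<in> Au" and i: "(C0,C) \<in> iso_un r s \<Delta>" for C0 C
  proof -
    obtain \<sigma> where \<sigma>: "curve_iso r s \<Delta> C0 C \<sigma>" using i unfolding iso_un_def by auto
    interpret J: isoc r s \<Delta> C0 C \<sigma> using \<sigma> curv[OF C0] by unfold_locales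
    show ?thesis by (rule J.mult_un')
  qed
  define h where "h K = {Co \<in> Ao. fst Co \<in> K}" for K
  have Rucls: "Ru `` {C0} = {C \<in> Au. (C0,C) \<in> iso_un r s \<Delta>}" if "C0 \<in> Au" for C0
    using that unfolding Ru_def by auto
  have hcls: "h (Ru `` {C0}) = Ro `` {(C0, B.ori0 C0)}" if C0: "C0 \<in> Au" for C0
  proof (rule set_eqI)
    fix Co :: "pcurve \<times> (nat \<Rightarrow> nat \<Rightarrow> bool)"
    obtain C orr where Co: "Co = (C,orr)" by (cases Co)
    show "Co \<in> h (Ru `` {C0}) \<longleftrightarrow> Co \<in> Ro `` {(C0, B.ori0 C0)}"
    proof
      assume "Co \<in> h (Ru `` {C0})"
      then have a: "(C,orr) \<in> Ao" "C \<in> Au" "(C0,C) \<in> iso_un r s \<Delta>"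
        unfolding h_def Rucls[OF C0] Co by auto
      have "orr = B.ori0 C" using k3[OF a(1)] .
      then show "Co \<in> Ro `` {(C0, B.ori0 C0)}"
        unfolding Ro_def Co using k4[OF C0 a(2,3)] a(1) k1[OF C0] by auto
    next
      assume "Co \<in> Ro `` {(C0, B.ori0 C0)}"
      then have a: "(C,orr) \<in> Ao" "((C0, B.ori0 C0), (C,orr)) \<in> iso_or r s \<Delta>" unfolding Ro_def Co by auto
      then have "(C0,C) \<in> iso_un r s \<Delta>" unfolding iso_or_def iso_un_def by auto
      then show "Co \<in> h (Ru `` {C0})" unfolding h_def Rucls[OF C0] Co using a k2 by auto
    qed
  qed
  have fsth: "fst ` h K = K" if KK: "K \<in> Au // Ru" for K
  proof -
    obtain C0 where C0: "C0 \<in> Au" "K = Ru `` {C0}" using KK unfolding quotient_def by blast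
    show ?thesis
    proof
      show "fst ` h K \<subseteq> K" unfolding h_def by auto
      show "K \<subseteq> fst ` h K"
      proof
        fix C assume C: "C \<in> K"
        then have "C \<in> Au" using C0 Rucls by auto
        then have "(C, B.ori0 C) \<in> h K" using k1 C unfolding h_def by auto
        then show "C \<in> fst ` h K" by (auto intro: image_eqI[where x="(C, B.ori0 C)"])
      qed
    qed
  qed
  have bij: "bij_betw h (Au // Ru) (Ao // Ro)"
  proof (rule bij_betwI')
    fix K1 K2 assume "K1 \<in> Au // Ru" "K2 \<in> Au // Ru"
    then show "(h K1 = h K2) = (K1 = K2)" using fsth by metis
  next
    fix K assume "K \<in> Au // Ru"
    then obtain C0 where C0: "C0 \<in> Au" "K = Ru `` {C0}" unfolding quotient_def by blast
    then show "h K \<in> Ao // Ro" using hcls k1 by (auto intro: quotientI)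
  next
    fix K' assume "K' \<in> Ao // Ro"
    then obtain Co where Co: "Co \<in> Ao" "K' = Ro `` {Co}" unfolding quotient_def by blast
    obtain C0 orr where Cs: "Co = (C0, orr)" by (cases Co)
    have C0: "C0 \<in> Au" using k2 Co Cs by auto
    have "orr = B.ori0 C0" using k3 Co Cs by auto
    then have "K' = h (Ru `` {C0})" using hcls[OF C0] Co Cs by simp
    moreover have "Ru `` {C0} \<in> Au // Ru" using C0 by (rule quotientI)
    ultimately show "\<exists>K\<in>Au // Ru. K' = h K" by blast
  qed
  have pt: "mult_or r s \<Delta> F y (SOME Co. Co \<in> h K) = mult_un r s \<Delta> F y (SOME C. C \<in> K)"
    if K: "K \<in> Au // Ru" for K
  proof -
    obtain C0 where C0: "C0 \<in> Au" "K = Ru `` {C0}" using K unfolding quotient_def by blast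
    have refl: "(C0,C0) \<in> iso_un r s \<Delta>" unfolding iso_un_def using iso_refl by blast
    have "C0 \<in> K" using C0 refl Rucls by auto
    then have s1: "(SOME C. C \<in> K) \<in> K" by (rule someI)
    have "(C0, B.ori0 C0) \<in> h K" using C0 \<open>C0 \<in> K\<close> k1 unfolding h_def by auto
    then have s2: "(SOME Co. Co \<in> h K) \<in> h K" by (rule someI)
    obtain C1 o1 where C1: "(SOME Co. Co \<in> h K) = (C1, o1)" by (cases "SOME Co. Co \<in> h K")
    have a1: "(C1,o1) \<in> Ao" "C1 \<in> K" using s2 C1 unfolding h_def by auto
    have "mult_or r s \<Delta> F y (C1,o1) = mult_un r s \<Delta> F y C1"
      using B.mult_or_un a1(1) Ao_iff by auto
    also have "\<dots> = mult_un r s \<Delta> F y C0" using k5[OF C0(1)] a1(2) C0 Rucls by auto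
    also have "\<dots> = mult_un r s \<Delta> F y (SOME C. C \<in> K)" using k5[OF C0(1)] s1 C0 Rucls by auto
    finally show ?thesis using C1 by simp
  qed
  have "(\<Sum>K' \<in> Ao // Ro. mult_or r s \<Delta> F y (SOME Co. Co \<in> K'))
      = (\<Sum>K \<in> Au // Ru. mult_or r s \<Delta> F y (SOME Co. Co \<in> h K))"
    by (rule sum.reindex_bij_betw[OF bij, symmetric])
  also have "\<dots> = (\<Sum>K \<in> Au // Ru. mult_un r s \<Delta> F y (SOME C. C \<in> K))"
    by (rule sum.cong) (auto simp: pt)
  finally show ?thesis
    unfolding N_urB_def N_rB_def Let_def Au_def[symmetric] Ao_def[symmetric] Ru_def[symmetric] Ro_def[symmetric]
    by simp
qed


end
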